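(* Let $k\ge3$ and let $\{S_n\}$ be a perturbed sequence of weak shifts of degree $d$ corresponding to a uniformly bounded sequence of weak shift-like maps of degree $\tilde d\le d-2$. Let $G_n(z)=d^{-n}\log^+\|S(n)(z)\|_{\sup}$. Then $\{G_n\}$ converges uniformly on compact subsets of $U^+$ to a continuous, non-constant, pluriharmonic function $\tilde G$ on $U^+$.
   Context: Let $Q_m(z)=z^m$ and $\mathbf H_d(w_1,\dots,w_{k-1})=\sum_{i=1}^{k-1}w_i^d$. A uniformly bounded sequence of weak shift-like maps of degree $\tilde d\ge1$ is a sequence $\mathsf S_n(z)=(z_2,\dots,z_k,a_nz_1+p_n(z_2,\dots,z_k))$ with $\deg(a_nz_1+p_n)=\tilde d$, $p_n=\sum_{i}\alpha_{i,n}\mathbf z^i$ (multi-indices of total degree $\le\tilde d$), and constants $\tilde m,\tilde M>0$ with $\tilde m<|a_n|<\tilde M$, $|\alpha_{i,n}|<\tilde M$ for all $n,i$. The associated perturbed sequence of weak shifts of degree $d\ge\tilde d+2$ is $S_n(z)=\mathsf S_n(z)+(0,\dots,0,Q_{d-1}(z_2),\mathbf H_d(z_2,\dots,z_k))$. $S(n)=S_n\circ\cdots\circ S_1$. $\|\cdot\|_{\sup}$ is the sup-norm on $\mathbb{C}^k$ and $\log^+=\max\{\log,0\}$. $U^+=\{z\in\mathbb{C}^k:\overline{S(n)}([z:1])\to[0:\cdots:0:1:0]\}$, where $\overline{S(n)}$ is the extension to $\mathbb{P}^k$ and the limit point has the $k$-th homogeneous coordinate equal to 1 and all others 0. *)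

theory Defs
  imports "HOL-Analysis.Analysis"
begin

text \<open>Points of C^k are vectors of type complex^'n with k = CARD('n).
  Coordinates are labelled 1..k through a fixed bijection idx.\<close>

definition idx :: "nat \<Rightarrow> 'n::finite" where
  "idx = (SOME f. bij_betw f {1..CARD('n)} (UNIV::'n set))"

definition pos :: "'n::finite \<Rightarrow> nat" where
  "pos = inv_into {1..CARD('n)} idx"

definition coord :: "complex^'n::finite \<Rightarrow> nat \<Rightarrow> complex" where
  "coord z j = z $ idx j"

definition mkvec :: "(nat \<Rightarrow> complex) \<Rightarrow> complex^'n::finite" where
  "mkvec f = (\<chi> i. f (pos i))"

definition multi_indices :: "nat \<Rightarrow> nat \<Rightarrow> (nat \<Rightarrow> nat) set" where
  "multi_indices k dt = {m. (\<forall>j. j \<notin> {2..k} \<longrightarrow> m j = 0) \<and> (\<Sum>j=2..k. m j) \<le> dt}"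

definition poly_p :: "nat \<Rightarrow> ((nat \<Rightarrow> nat) \<Rightarrow> complex) \<Rightarrow> complex^'n::finite \<Rightarrow> complex" where
  "poly_p dt \<alpha> z = (\<Sum>m\<in>multi_indices CARD('n) dt. \<alpha> m * (\<Prod>j=2..CARD('n). coord z j ^ m j))"

text \<open>Uniformly bounded sequence of weak shift-like maps of degree dt (indices n \<ge> 1),
  given by a_n and the coefficients alpha_{i,n} of p_n.  The degree condition
  deg(a_n z_1 + p_n) = dt (with a_n \<noteq> 0) is: dt = 1, or some monomial of total degree dt
  has nonzero coefficient.\<close>
definition weak_shift_like_seq ::
  "nat \<Rightarrow> nat \<Rightarrow> (nat \<Rightarrow> complex) \<Rightarrow> (nat \<Rightarrow> (nat \<Rightarrow> nat) \<Rightarrow> complex) \<Rightarrow> real \<Rightarrow> real \<Rightarrow> bool" where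
  "weak_shift_like_seq k dt a \<alpha> mt Mt \<longleftrightarrow>
     dt \<ge> 1 \<and> mt > 0 \<and> Mt > 0 \<and>
     (\<forall>n\<ge>1. mt < norm (a n) \<and> norm (a n) < Mt) \<and>
     (\<forall>n\<ge>1. \<forall>m\<in>multi_indices k dt. norm (\<alpha> n m) < Mt) \<and>
     (\<forall>n\<ge>1. dt = 1 \<or> (\<exists>m\<in>multi_indices k dt. (\<Sum>j=2..k. m j) = dt \<and> \<alpha> n m \<noteq> 0))"

text \<open>The perturbed weak shift S_n = shift-like map + (0,..,0,z_2^(d-1), sum_{j=2..k} z_j^d).\<close>
definition pert_shift ::
  "nat \<Rightarrow> complex \<Rightarrow> ((nat \<Rightarrow> nat) \<Rightarrow> complex) \<Rightarrow> nat \<Rightarrow> complex^'n::finite \<Rightarrow> complex^'n" where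
  "pert_shift dt a \<alpha> d z = mkvec (\<lambda>j.
      if j \<le> CARD('n) - 2 then coord z (j + 1)
      else if j = CARD('n) - 1 then coord z CARD('n) + coord z 2 ^ (d - 1)
      else a * coord z 1 + poly_p dt \<alpha> z + (\<Sum>i=2..CARD('n). coord z i ^ d))"

fun Scomp :: "(nat \<Rightarrow> 'a \<Rightarrow> 'a) \<Rightarrow> nat \<Rightarrow> 'a \<Rightarrow> 'a" where
  "Scomp S 0 = id"
| "Scomp S (Suc n) = S (Suc n) \<circ> Scomp S n"

definition supnorm :: "complex^'n::finite \<Rightarrow> real" where
  "supnorm z = Max (range (\<lambda>i. norm (z $ i)))"

definition log_plus :: "real \<Rightarrow> real" where
  "log_plus x = max (ln x) 0"

text \<open>U^+: [S(n)(z):1] converges in P^k to [0:..:0:1:0]; expressed in the standard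
  affine chart {x_k \<noteq> 0} of P^k, which is an open neighbourhood of the limit point.\<close>
definition Uplus :: "(nat \<Rightarrow> complex^'n::finite \<Rightarrow> complex^'n) \<Rightarrow> (complex^'n) set" where
  "Uplus S = {z. eventually (\<lambda>n. coord (Scomp S n z) CARD('n) \<noteq> 0) sequentially \<and>
      (\<forall>j\<in>{1..<CARD('n)}. ((\<lambda>n. coord (Scomp S n z) j / coord (Scomp S n z) CARD('n)) \<longlongrightarrow> 0) sequentially) \<and>
      ((\<lambda>n. 1 / coord (Scomp S n z) CARD('n)) \<longlongrightarrow> 0) sequentially}"

definition cscale :: "complex \<Rightarrow> complex^'n::finite \<Rightarrow> complex^'n" where
  "cscale c v = (\<chi> i. c * v $ i)"

text \<open>Pluriharmonic: U open, u real C^2 (on C^k viewed as a real space) with vanishing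
  Levi form ddbar u, i.e. D^2u(x)(v,v) + D^2u(x)(iv,iv) = 0 for all v.\<close>
definition pluriharmonic :: "(complex^'n::finite) set \<Rightarrow> (complex^'n \<Rightarrow> real) \<Rightarrow> bool" where
  "pluriharmonic U u \<longleftrightarrow> open U \<and>
     (\<exists>Du D2u. (\<forall>x\<in>U. (u has_derivative Du x) (at x)) \<and>
        (\<forall>x\<in>U. \<forall>v. ((\<lambda>y. Du y v) has_derivative (\<lambda>w. D2u x w v)) (at x)) \<and>
        (\<forall>v w. continuous_on U (\<lambda>x. D2u x w v)) \<and>
        (\<forall>x\<in>U. \<forall>v. D2u x v v + D2u x (cscale \<i> v) (cscale \<i> v) = 0))"

end

theory Submission
  imports Defs "HOL-Complex_Analysis.Complex_Analysis"
begin

lemma idx_bij: "bij_betw (idx :: nat \<Rightarrow> 'n::finite) {1..CARD('n)} UNIV"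
proof -
  have "\<exists>h. bij_betw h {1..card (UNIV::'n set)} (UNIV::'n set)"
    by (rule ex_bij_betw_nat_finite_1) simp
  then show ?thesis unfolding idx_def by (rule someI_ex)
qed

lemma pos_range: "pos (i::'n::finite) \<in> {1..CARD('n)}"
  unfolding pos_def using idx_bij[where 'n='n]
  by (metis UNIV_I bij_betw_def inv_into_into)

lemma idx_pos [simp]: "idx (pos (i::'n::finite)) = i"
  unfolding pos_def using idx_bij[where 'n='n]
  by (metis UNIV_I bij_betw_def f_inv_into_f)

lemma pos_idx: "j \<in> {1..CARD('n::finite)} \<Longrightarrow> pos (idx j :: 'n) = j"
  unfolding pos_def using idx_bij[where 'n='n]
  by (metis bij_betw_def inv_into_f_f)

lemma coord_mkvec: "j \<in> {1..CARD('n::finite)} \<Longrightarrow> coord (mkvec f :: complex^'n) j = f j"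
  unfolding coord_def mkvec_def by (simp add: pos_idx)

lemma coord_mkvec': "coord (mkvec f :: complex^'n::finite) j = f (pos (idx j :: 'n))"
  unfolding coord_def mkvec_def by simp

lemma vec_nth_coord: "(z::complex^'n::finite) $ i = coord z (pos i)"
  unfolding coord_def by simp

lemma supnorm_eq:
  fixes z :: "complex^'n::finite"
  assumes "\<forall>j\<in>{1..<CARD('n)}. norm (coord z j) \<le> norm (coord z CARD('n))"
  shows "supnorm z = norm (coord z CARD('n))"
  unfolding supnorm_def
proof (rule Max_eqI)
  show "finite (range (\<lambda>i. norm (z $ i)))" by simp
  fix y assume "y \<in> range (\<lambda>i. norm (z $ i))"
  then obtain i where y: "y = norm (z $ i)" by auto
  have p: "pos i \<in> {1..CARD('n)}" by (rule pos_range)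
  show "y \<le> norm (coord z CARD('n))"
  proof (cases "pos i = CARD('n)")
    case True then show ?thesis using y by (simp add: vec_nth_coord)
  next
    case False then show ?thesis using y p assms by (auto simp: vec_nth_coord)
  qed
next
  show "norm (coord z CARD('n)) \<in> range (\<lambda>i. norm (z $ i))"
    unfolding coord_def by auto
qed

lemma norm_cscale: "norm (cscale c (v::complex^'n::finite)) = cmod c * norm v"
  unfolding cscale_def norm_vec_def
  by (simp add: norm_mult L2_set_right_distrib)

lemma cscale_of_real: "cscale (of_real r) (v::complex^'n::finite) = r *\<^sub>R v"
  unfolding cscale_def by (simp add: vec_eq_iff) (simp add: scaleR_conv_of_real)

lemma bounded_linear_cscale: "bounded_linear (\<lambda>t. cscale t (u::complex^'n::finite))"
proof (rule bounded_linear_intro[where K="norm u"])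
  fix x y show "cscale (x + y) u = cscale x u + cscale y u"
    unfolding cscale_def by (simp add: vec_eq_iff algebra_simps)
next
  fix r x show "cscale (r *\<^sub>R x) u = r *\<^sub>R cscale x u"
    unfolding cscale_def by (simp add: vec_eq_iff)
next
  fix x show "norm (cscale x u) \<le> norm x * norm u" by (simp add: norm_cscale)
qed

lemma bounded_linear_coord: "bounded_linear (\<lambda>z::complex^'n::finite. coord z j)"
  unfolding coord_def by (rule bounded_linear_vec_nth)

lemma coord_cscale: "coord (cscale c v) j = c * coord v j"
  unfolding coord_def cscale_def by simp

definition clin :: "(complex^'n::finite \<Rightarrow> complex) \<Rightarrow> bool" where
  "clin L \<longleftrightarrow> (\<forall>c v. L (cscale c v) = c * L v)"

definition hol :: "(complex^'n::finite) set \<Rightarrow> (complex^'n \<Rightarrow> complex) \<Rightarrow> bool" where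
  "hol U f \<longleftrightarrow> open U \<and> (\<forall>x\<in>U. f differentiable (at x)) \<and>
     (\<forall>x\<in>U. clin (frechet_derivative f (at x))) \<and>
     (\<forall>v. continuous_on U (\<lambda>x. frechet_derivative f (at x) v))"

lemma holI:
  assumes "open U" "\<And>x. x \<in> U \<Longrightarrow> (f has_derivative Df x) (at x)"
    "\<And>x. x \<in> U \<Longrightarrow> clin (Df x)" "\<And>v. continuous_on U (\<lambda>x. Df x v)"
  shows "hol U f"
proof -
  have e: "\<And>x. x \<in> U \<Longrightarrow> frechet_derivative f (at x) = Df x"
    using assms(2) frechet_derivative_at by metis
  show ?thesis unfolding hol_def
  proof (intro conjI ballI allI)
    fix v show "continuous_on U (\<lambda>x. frechet_derivative f (at x) v)"
      using assms(4)[of v] by (rule continuous_on_cong[THEN iffD1, rotated 2]) (auto simp: e)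
  qed (use assms e in \<open>auto simp: differentiable_def\<close>)
qed

lemma holD: "hol U f \<Longrightarrow> x \<in> U \<Longrightarrow> (f has_derivative frechet_derivative f (at x)) (at x)"
  unfolding hol_def using frechet_derivative_works by blast

lemma hol_open: "hol U f \<Longrightarrow> open U" unfolding hol_def by blast

lemma hol_clin: "hol U f \<Longrightarrow> x \<in> U \<Longrightarrow> clin (frechet_derivative f (at x))"
  unfolding hol_def by blast

lemma hol_dcont: "hol U f \<Longrightarrow> continuous_on U (\<lambda>x. frechet_derivative f (at x) v)"
  unfolding hol_def by blast

lemma hol_cont: "hol U f \<Longrightarrow> continuous_on U f"
  by (meson continuous_at_imp_continuous_on has_derivative_continuous holD)

lemma hol_local:
  assumes "open U" "\<And>x. x \<in> U \<Longrightarrow> \<exists>V. open V \<and> x \<in> V \<and> V \<subseteq> U \<and> hol V f"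
  shows "hol U f"
  unfolding hol_def
proof (intro conjI ballI allI)
  fix x assume "x \<in> U"
  then obtain V where V: "open V" "x \<in> V" "V \<subseteq> U" "hol V f" using assms by blast
  then show "f differentiable (at x)" "clin (frechet_derivative f (at x))"
    unfolding hol_def by auto
next
  fix v
  show "continuous_on U (\<lambda>x. frechet_derivative f (at x) v)"
    unfolding continuous_on_eq_continuous_at[OF assms(1)]
  proof
    fix x assume "x \<in> U"
    then obtain V where V: "open V" "x \<in> V" "V \<subseteq> U" "hol V f" using assms by blast
    then show "isCont (\<lambda>x. frechet_derivative f (at x) v) x"
      using continuous_on_eq_continuous_at hol_dcont by blast
  qed
qed (use assms in auto)

lemma hol_subset: "hol U f \<Longrightarrow> open V \<Longrightarrow> V \<subseteq> U \<Longrightarrow> hol V f"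
  unfolding hol_def by (auto intro: continuous_on_subset)

lemma hol_cong:
  assumes "hol U f" "\<And>x. x \<in> U \<Longrightarrow> f x = g x"
  shows "hol U g"
proof (rule holI)
  show "open U" using assms hol_open by blast
  fix x assume x: "x \<in> U"
  show "(g has_derivative frechet_derivative f (at x)) (at x)"
    by (rule has_derivative_transform_within_open[OF holD[OF assms(1) x] \<open>open U\<close> x assms(2)])
  show "clin (frechet_derivative f (at x))" using hol_clin assms(1) x by blast
next
  fix v show "continuous_on U (\<lambda>x. frechet_derivative f (at x) v)" using hol_dcont assms(1) by blast
qed

lemma hol_const: "open U \<Longrightarrow> hol U (\<lambda>x. c)"
  by (rule holI[where Df="\<lambda>x v. 0"]) (auto simp: clin_def)

lemma hol_coord: "open U \<Longrightarrow> hol U (\<lambda>x. coord x j)"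
  by (rule holI[where Df="\<lambda>x v. coord v j"])
     (auto simp: clin_def coord_cscale intro: bounded_linear.has_derivative[OF bounded_linear_coord] has_derivative_ident)

lemma hol_add:
  assumes "hol U f" "hol U g" shows "hol U (\<lambda>x. f x + g x)"
proof (rule holI[where Df="\<lambda>x v. frechet_derivative f (at x) v + frechet_derivative g (at x) v"])
  show "open U" using assms hol_open by blast
  fix x assume "x \<in> U"
  then show "((\<lambda>x. f x + g x) has_derivative (\<lambda>v. frechet_derivative f (at x) v + frechet_derivative g (at x) v)) (at x)"
    using assms by (intro has_derivative_add holD)
  show "clin (\<lambda>v. frechet_derivative f (at x) v + frechet_derivative g (at x) v)"
    using hol_clin[OF assms(1) \<open>x \<in> U\<close>] hol_clin[OF assms(2) \<open>x \<in> U\<close>] unfolding clin_def by (simp add: algebra_simps)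
next
  fix v show "continuous_on U (\<lambda>x. frechet_derivative f (at x) v + frechet_derivative g (at x) v)"
    using assms by (intro continuous_intros hol_dcont)
qed

lemma hol_mult:
  assumes "hol U f" "hol U g" shows "hol U (\<lambda>x. f x * g x)"
proof (rule holI[where Df="\<lambda>x v. f x * frechet_derivative g (at x) v + frechet_derivative f (at x) v * g x"])
  show "open U" using assms hol_open by blast
  fix x assume "x \<in> U"
  then show "((\<lambda>x. f x * g x) has_derivative (\<lambda>v. f x * frechet_derivative g (at x) v + frechet_derivative f (at x) v * g x)) (at x)"
    using assms by (intro has_derivative_mult holD)
  show "clin (\<lambda>v. f x * frechet_derivative g (at x) v + frechet_derivative f (at x) v * g x)"
    using hol_clin[OF assms(1) \<open>x \<in> U\<close>] hol_clin[OF assms(2) \<open>x \<in> U\<close>] unfolding clin_def by (simp add: algebra_simps)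
next
  fix v show "continuous_on U (\<lambda>x. f x * frechet_derivative g (at x) v + frechet_derivative f (at x) v * g x)"
    using assms by (intro continuous_intros hol_dcont hol_cont)
qed

lemma hol_sum:
  assumes "open U" "\<And>i. i \<in> A \<Longrightarrow> hol U (f i)" shows "hol U (\<lambda>x. \<Sum>i\<in>A. f i x)"
proof (cases "finite A")
  case True then show ?thesis using assms(2)
    by (induction A rule: finite_induct) (auto intro: hol_const[OF assms(1)] hol_add)
next
  case False then show ?thesis using hol_const[OF assms(1)] by simp
qed

lemma hol_prod:
  assumes "open U" "\<And>i. i \<in> A \<Longrightarrow> hol U (f i)" shows "hol U (\<lambda>x. \<Prod>i\<in>A. f i x)"
proof (cases "finite A")
  case True then show ?thesis using assms(2)
    by (induction A rule: finite_induct) (auto intro: hol_const[OF assms(1)] hol_mult)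
next
  case False then show ?thesis using hol_const[OF assms(1)] by simp
qed

lemma hol_power:
  assumes "hol U f" shows "hol U (\<lambda>x. f x ^ n)"
proof (induction n)
  case 0 then show ?case using hol_const hol_open assms by auto
next
  case (Suc n) then show ?case using hol_mult[OF assms Suc] by simp
qed

lemma hol_compose:
  assumes "hol U f" "g holomorphic_on V" "open V" "\<And>x. x \<in> U \<Longrightarrow> f x \<in> V"
  shows "hol U (\<lambda>x. g (f x))"
proof (rule holI[where Df="\<lambda>x v. deriv g (f x) * frechet_derivative f (at x) v"])
  show "open U" using assms hol_open by blast
  fix x assume x: "x \<in> U"
  have "(g has_field_derivative deriv g (f x)) (at (f x))"
    using holomorphic_derivI[OF assms(2,3) assms(4)[OF x]] .
  then have "(g has_derivative (\<lambda>h. deriv g (f x) * h)) (at (f x))"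
    by (simp add: has_field_derivative_def)
  from diff_chain_at[OF holD[OF assms(1) x] this]
  show "((\<lambda>x. g (f x)) has_derivative (\<lambda>v. deriv g (f x) * frechet_derivative f (at x) v)) (at x)"
    by (simp add: o_def)
  show "clin (\<lambda>v. deriv g (f x) * frechet_derivative f (at x) v)"
    using hol_clin[OF assms(1) x] by (auto simp: clin_def algebra_simps)
next
  fix v
  have "continuous_on V (deriv g)"
    using assms(2,3) holomorphic_deriv holomorphic_on_imp_continuous_on by blast
  then have "continuous_on U (\<lambda>x. deriv g (f x))"
    using continuous_on_compose2[OF _ hol_cont[OF assms(1)]] assms(4) by blast
  then show "continuous_on U (\<lambda>x. deriv g (f x) * frechet_derivative f (at x) v)"
    using assms by (intro continuous_intros hol_dcont)
qed

lemma clin_linear0: "hol U f \<Longrightarrow> x \<in> U \<Longrightarrow> frechet_derivative f (at x) 0 = 0"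
  using holD has_derivative_bounded_linear linear_0 bounded_linear.linear by blast

lemma hol_deriv_bound:
  assumes h: "hol U h" and r: "0 < r" and sub: "cball y r \<subseteq> U"
    and B: "\<And>z. z \<in> cball y r \<Longrightarrow> norm (h z) \<le> B"
  shows "norm (frechet_derivative h (at y) v) \<le> B * norm v / r"
proof (cases "v = 0")
  case True
  have "y \<in> U" using sub r by auto
  then show ?thesis using True clin_linear0[OF h] by simp
next
  case False
  define u where "u = (1 / norm v) *\<^sub>R v"
  have nu: "norm u = 1" using False by (simp add: u_def)
  define \<phi> where "\<phi> t = h (y + cscale t u)" for t
  have mem: "y + cscale t u \<in> cball y r" if "cmod t \<le> r" for t
    using that by (simp add: dist_norm norm_cscale nu)
  have memb: "y + cscale t u \<in> ball y r" if "cmod t < r" for t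
    using that by (simp add: dist_norm norm_cscale nu)
  have der: "(\<phi> has_field_derivative frechet_derivative h (at (y + cscale t u)) u) (at t)"
    if "cmod t < r" for t
  proof -
    have z: "y + cscale t u \<in> U" using memb[OF that] sub by auto
    have l: "((\<lambda>t. y + cscale t u) has_derivative (\<lambda>s. cscale s u)) (at t)"
      using has_derivative_add[OF has_derivative_const[of y] bounded_linear_imp_has_derivative[OF bounded_linear_cscale[of u]]]
      by simp
    have "(\<phi> has_derivative (\<lambda>s. frechet_derivative h (at (y + cscale t u)) (cscale s u))) (at t)"
      unfolding \<phi>_def using diff_chain_at[OF l holD[OF h z]] by (simp add: o_def)
    moreover have "(\<lambda>s. frechet_derivative h (at (y + cscale t u)) (cscale s u)) =
        (*) (frechet_derivative h (at (y + cscale t u)) u)"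
      using hol_clin[OF h z] by (auto simp: clin_def fun_eq_iff mult.commute)
    ultimately show ?thesis by (simp add: has_field_derivative_def)
  qed
  have holo: "\<phi> holomorphic_on ball 0 r"
    unfolding holomorphic_on_def field_differentiable_def
    using der by (metis dist_0_norm has_field_derivative_at_within mem_ball)
  have cont: "continuous_on (cball 0 r) \<phi>"
  proof -
    have "continuous_on (cball 0 r) (\<lambda>t. y + cscale t u)"
      by (intro continuous_intros linear_continuous_on bounded_linear_cscale)
    moreover have "(\<lambda>t. y + cscale t u) ` cball 0 r \<subseteq> U" using mem sub by auto
    ultimately show ?thesis unfolding \<phi>_def
      using continuous_on_compose2[OF hol_cont[OF h]] by blast
  qed
  have "norm ((deriv ^^ 1) \<phi> 0) \<le> fact 1 * B / r ^ 1"
  proof (rule Cauchy_inequality[OF holo cont r])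
    fix t :: complex assume "norm (0 - t) = r"
    then have "cmod t \<le> r" by simp
    then show "norm (\<phi> t) \<le> B" unfolding \<phi>_def using mem B by blast
  qed
  moreover have "deriv \<phi> 0 = frechet_derivative h (at y) u"
  proof -
    have "cscale 0 u = 0" by (simp add: cscale_def vec_eq_iff)
    then show ?thesis using DERIV_imp_deriv[OF der[of 0]] r by simp
  qed
  ultimately have bu: "norm (frechet_derivative h (at y) u) \<le> B / r" by simp
  have "y \<in> U" using sub r by auto
  have "v = cscale (of_real (norm v)) u" using False by (simp add: cscale_of_real u_def)
  then have "frechet_derivative h (at y) v = of_real (norm v) * frechet_derivative h (at y) u"
    using hol_clin[OF h \<open>y \<in> U\<close>] unfolding clin_def by metis
  then show ?thesis using bu
    by (simp add: norm_mult) (metis mult.commute mult_left_mono norm_ge_zero times_divide_eq_right)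
qed

lemma hol_diff:
  assumes "hol U f" "hol U g" shows "hol U (\<lambda>x. f x - g x)"
proof (rule holI[where Df="\<lambda>x v. frechet_derivative f (at x) v - frechet_derivative g (at x) v"])
  show "open U" using assms hol_open by blast
  fix x assume "x \<in> U"
  then show "((\<lambda>x. f x - g x) has_derivative (\<lambda>v. frechet_derivative f (at x) v - frechet_derivative g (at x) v)) (at x)"
    using assms by (intro has_derivative_diff holD)
  show "clin (\<lambda>v. frechet_derivative f (at x) v - frechet_derivative g (at x) v)"
    using hol_clin[OF assms(1) \<open>x \<in> U\<close>] hol_clin[OF assms(2) \<open>x \<in> U\<close>] unfolding clin_def by (simp add: algebra_simps)
next
  fix v show "continuous_on U (\<lambda>x. frechet_derivative f (at x) v - frechet_derivative g (at x) v)"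
    using assms by (intro continuous_intros hol_dcont)
qed

lemma frechet_diff:
  assumes "hol U f" "hol U g" "x \<in> U"
  shows "frechet_derivative (\<lambda>x. f x - g x) (at x) v = frechet_derivative f (at x) v - frechet_derivative g (at x) v"
proof -
  have "((\<lambda>x. f x - g x) has_derivative (\<lambda>v. frechet_derivative f (at x) v - frechet_derivative g (at x) v)) (at x)"
    using assms by (intro has_derivative_diff holD)
  from fun_cong[OF frechet_derivative_at[OF this], of v] show ?thesis by simp
qed

lemma small_lem: "(e::real) > 0 \<Longrightarrow> (e/2) / (norm v + 1) * norm v < e"
proof -
  assume e: "e > 0"
  have n: "norm v \<ge> 0" by simp
  have p: "norm v + 1 > 0" using n by linarith
  have "norm v / (norm v + 1) \<le> 1" using p by (simp add: divide_le_eq_1)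
  then have "(e/2) * (norm v / (norm v + 1)) \<le> e/2" using e by (intro mult_left_le) auto
  moreover have "(e/2)/(norm v+1)*norm v = (e/2)*(norm v/(norm v+1))" by simp
  ultimately show ?thesis using e by linarith
qed

lemma seq_deriv_open:
  fixes f :: "nat \<Rightarrow> 'a::real_normed_vector \<Rightarrow> 'b::banach"
  assumes V: "open V" "convex V"
    and der: "\<And>n x. x \<in> V \<Longrightarrow> (f n has_derivative F n x) (at x)"
    and nle: "\<And>e. e > 0 \<Longrightarrow> \<exists>N. \<forall>n\<ge>N. \<forall>x\<in>V. \<forall>h. norm (F n x h - Df x h) \<le> e * norm h"
    and lim: "\<And>x. x \<in> V \<Longrightarrow> (\<lambda>n. f n x) \<longlonglongrightarrow> g x"
    and y: "y \<in> V"
  shows "(g has_derivative Df y) (at y)"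
proof -
  have "\<exists>g2. \<forall>x\<in>V. (\<lambda>n. f n x) \<longlonglongrightarrow> g2 x \<and> (g2 has_derivative Df x) (at x within V)"
  proof (rule has_derivative_sequence[where f=f and f'=F and g'=Df, OF V(2) _ _ y lim[OF y]])
    show "\<And>n x. x \<in> V \<Longrightarrow> (f n has_derivative F n x) (at x within V)"
      by (rule has_derivative_at_withinI) (rule der)
    show "\<And>e. e > 0 \<Longrightarrow> \<forall>\<^sub>F n in sequentially. \<forall>x\<in>V. \<forall>h. norm (F n x h - Df x h) \<le> e * norm h"
      unfolding eventually_sequentially by (rule nle)
  qed
  then obtain g2 where g2: "\<And>x. x \<in> V \<Longrightarrow> (\<lambda>n. f n x) \<longlonglongrightarrow> g2 x"
      "\<And>x. x \<in> V \<Longrightarrow> (g2 has_derivative Df x) (at x within V)"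
    by blast
  have eq: "g2 x = g x" if "x \<in> V" for x
    using g2(1)[OF that] lim[OF that] by (rule LIMSEQ_unique)
  have "(g2 has_derivative Df y) (at y)" using g2(2)[OF y] at_within_open[OF y V(1)] by simp
  then show ?thesis by (rule has_derivative_transform_within_open[OF _ V(1) y eq])
qed

lemma hol_uniform_limit:
  fixes f :: "nat \<Rightarrow> complex^'n::finite \<Rightarrow> complex"
  assumes U: "open U" and hf: "\<And>j. hol U (f j)" and ul: "uniform_limit U f g sequentially"
  shows "hol U g"
proof (rule hol_local[OF U])
  fix x0 assume x0: "x0 \<in> U"
  obtain r2 where r2: "r2 > 0" "cball x0 r2 \<subseteq> U" using U x0 open_contains_cball by blast
  define r where "r = r2 / 2"
  have r: "r > 0" using r2 by (simp add: r_def)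
  define V where "V = ball x0 r"
  have sub: "cball y r \<subseteq> U" if "y \<in> V" for y
  proof
    fix z assume "z \<in> cball y r"
    have "dist x0 z \<le> dist x0 y + dist y z" by (rule dist_triangle)
    moreover have "dist x0 y < r" "dist y z \<le> r" using that \<open>z \<in> cball y r\<close> unfolding V_def by auto
    ultimately have "dist x0 z \<le> r2" unfolding r_def by linarith
    then show "z \<in> U" using r2 by auto
  qed
  have VU: "V \<subseteq> U" using sub r by (auto simp: subset_eq)
  define F where "F j y = frechet_derivative (f j) (at y)" for j y
  have cauchy: "\<exists>N. \<forall>m\<ge>N. \<forall>n\<ge>N. \<forall>y\<in>V. \<forall>v. norm (F m y v - F n y v) \<le> e * norm v" if e: "e > 0" for e
  proof -
    have "e * r / 2 > 0" using e r by simp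
    from uniform_limitD[OF ul this] obtain N where N: "\<And>n x. n \<ge> N \<Longrightarrow> x \<in> U \<Longrightarrow> dist (f n x) (g x) < e * r / 2"
      unfolding eventually_sequentially by blast
    show ?thesis
    proof (intro exI allI impI ballI)
      fix m n y v assume mn: "m \<ge> N" "n \<ge> N" and y: "y \<in> V"
      have yU: "y \<in> U" using y VU by auto
      have b: "norm (f m z - f n z) \<le> e * r" if "z \<in> cball y r" for z
      proof -
        have "z \<in> U" using sub[OF y] that by blast
        then have "dist (f m z) (g z) < e * r / 2" "dist (f n z) (g z) < e * r / 2" using N mn by auto
        have "f m z - f n z = (f m z - g z) - (f n z - g z)" by simp
        then have "norm (f m z - f n z) \<le> norm (f m z - g z) + norm (f n z - g z)"
          by (metis norm_triangle_ineq4)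
        then show ?thesis using \<open>dist (f m z) (g z) < e * r / 2\<close> \<open>dist (f n z) (g z) < e * r / 2\<close>
          by (simp add: dist_norm)
      qed
      have "norm (frechet_derivative (\<lambda>x. f m x - f n x) (at y) v) \<le> e * r * norm v / r"
        by (rule hol_deriv_bound[OF hol_diff[OF hf hf] r sub[OF y] b])
      then show "norm (F m y v - F n y v) \<le> e * norm v"
        using frechet_diff[OF hf hf yU] r unfolding F_def by simp
    qed
  qed
  define Df where "Df y v = lim (\<lambda>j. F j y v)" for y v
  have conv: "(\<lambda>j. F j y v) \<longlonglongrightarrow> Df y v" if "y \<in> V" for y v
  proof -
    have "Cauchy (\<lambda>j. F j y v)"
    proof (rule CauchyI)
      fix e :: real assume e: "e > 0"
      have pos: "(e/2) / (norm v + 1) > 0" using e by (intro divide_pos_pos) (auto intro: add_nonneg_pos)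
      obtain N where N: "\<forall>m\<ge>N. \<forall>n\<ge>N. \<forall>y\<in>V. \<forall>w. norm (F m y w - F n y w) \<le> (e/2) / (norm v + 1) * norm w"
        using cauchy[OF pos] by blast
      show "\<exists>M. \<forall>m\<ge>M. \<forall>n\<ge>M. norm (F m y v - F n y v) < e"
      proof (intro exI allI impI)
        fix m n assume "m \<ge> N" "n \<ge> N"
        then have "norm (F m y v - F n y v) \<le> (e/2) / (norm v + 1) * norm v" using N that by blast
        also have "\<dots> < e" using e
          by (rule small_lem)
        finally show "norm (F m y v - F n y v) < e" .
      qed
    qed
    then have "convergent (\<lambda>j. F j y v)" by (simp add: Cauchy_convergent_iff)
    then show ?thesis unfolding Df_def by (simp add: convergent_LIMSEQ_iff)
  qed
  have unif: "\<exists>N. \<forall>n\<ge>N. \<forall>y\<in>V. \<forall>v. norm (F n y v - Df y v) \<le> e * norm v" if e: "e > 0" for e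
  proof -
    obtain N where N: "\<forall>m\<ge>N. \<forall>n\<ge>N. \<forall>y\<in>V. \<forall>v. norm (F m y v - F n y v) \<le> e * norm v"
      using cauchy e by blast
    show ?thesis
    proof (intro exI allI impI ballI)
      fix n y v assume n: "n \<ge> N" and y: "y \<in> V"
      have "(\<lambda>m. F n y v - F m y v) \<longlonglongrightarrow> F n y v - Df y v"
        by (intro tendsto_intros conv y)
      moreover have "eventually (\<lambda>m. norm (F n y v - F m y v) \<le> e * norm v) sequentially"
        using N n y unfolding eventually_sequentially by blast
      ultimately show "norm (F n y v - Df y v) \<le> e * norm v"
        by (rule Lim_norm_ubound[rotated]) simp
    qed
  qed
  have x0V: "x0 \<in> V" using r by (simp add: V_def)
  have derV: "(g has_derivative Df y) (at y)" if y: "y \<in> V" for y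
  proof (rule seq_deriv_open[where f=f and F=F and Df=Df and V=V])
    show "open V" "convex V" by (simp_all add: V_def)
    show "\<And>n x. x \<in> V \<Longrightarrow> (f n has_derivative F n x) (at x)"
      unfolding F_def using VU by (intro holD[OF hf]) auto
    show "\<And>e. e > 0 \<Longrightarrow> \<exists>N. \<forall>n\<ge>N. \<forall>x\<in>V. \<forall>h. norm (F n x h - Df x h) \<le> e * norm h"
      by (rule unif)
    show "\<And>x. x \<in> V \<Longrightarrow> (\<lambda>n. f n x) \<longlonglongrightarrow> g x"
      using VU by (intro tendsto_uniform_limitI[OF ul]) auto
    show "y \<in> V" by (rule y)
  qed
  have "hol V g"
  proof (rule holI[where Df=Df])
    show "open V" by (simp add: V_def)
    fix y assume y: "y \<in> V"
    show "(g has_derivative Df y) (at y)" by (rule derV[OF y])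
    have yU: "y \<in> U" using y VU by auto
    show "clin (Df y)" unfolding clin_def
    proof (intro allI)
      fix c v
      have "(\<lambda>j. F j y (cscale c v)) \<longlonglongrightarrow> Df y (cscale c v)" by (rule conv[OF y])
      moreover have "(\<lambda>j. F j y (cscale c v)) = (\<lambda>j. c * F j y v)"
        using hol_clin[OF hf yU] unfolding clin_def F_def by auto
      moreover have "(\<lambda>j. c * F j y v) \<longlonglongrightarrow> c * Df y v" by (intro tendsto_intros conv y)
      ultimately show "Df y (cscale c v) = c * Df y v" using LIMSEQ_unique by metis
    qed
  next
    fix v
    show "continuous_on V (\<lambda>y. Df y v)"
    proof (rule uniform_limit_theorem)
      show "\<forall>\<^sub>F j in sequentially. continuous_on V (\<lambda>y. F j y v)"
        unfolding F_def by (intro always_eventually allI continuous_on_subset[OF hol_dcont[OF hf] VU])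
      show "uniform_limit V (\<lambda>j y. F j y v) (\<lambda>y. Df y v) sequentially"
      proof (rule uniform_limitI)
        fix e :: real assume e: "e > 0"
        have pos: "(e/2) / (norm v + 1) > 0" using e by (intro divide_pos_pos) (auto intro: add_nonneg_pos)
        obtain N where N: "\<forall>n\<ge>N. \<forall>y\<in>V. \<forall>w. norm (F n y w - Df y w) \<le> (e/2) / (norm v + 1) * norm w"
          using unif[OF pos] by blast
        show "\<forall>\<^sub>F j in sequentially. \<forall>y\<in>V. dist (F j y v) (Df y v) < e"
          unfolding eventually_sequentially
        proof (intro exI allI impI ballI)
          fix n y assume "n \<ge> N" "y \<in> V"
          then have "norm (F n y v - Df y v) \<le> (e/2) / (norm v + 1) * norm v" using N by blast
          also have "\<dots> < e" using e
            by (rule small_lem)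
          finally show "dist (F n y v) (Df y v) < e" by (simp add: dist_norm)
        qed
      qed
    qed simp
  qed
  then show "\<exists>V. open V \<and> x0 \<in> V \<and> V \<subseteq> U \<and> hol V g"
    using x0V VU by (intro exI[of _ V]) (simp add: V_def)
qed

lemma hol_shift:
  assumes h: "hol U f" and V: "open V" and sub: "\<And>y. y \<in> V \<Longrightarrow> y + c \<in> U"
  shows "hol V (\<lambda>y. f (y + c))"
proof (rule holI[where Df="\<lambda>y. frechet_derivative f (at (y + c))"])
  show "open V" by (rule V)
  fix y assume y: "y \<in> V"
  have l: "((\<lambda>y. y + c) has_derivative (\<lambda>h. h)) (at y)"
    by (rule has_derivative_add_const[OF has_derivative_ident])
  show "((\<lambda>y. f (y + c)) has_derivative frechet_derivative f (at (y + c))) (at y)"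
    using diff_chain_at[OF l holD[OF h sub[OF y]]] by (simp add: o_def)
  show "clin (frechet_derivative f (at (y + c)))" using hol_clin[OF h sub[OF y]] .
next
  fix v
  have "continuous_on V (\<lambda>y. y + c)" by (intro continuous_intros)
  moreover have "(\<lambda>y. y + c) ` V \<subseteq> U" using sub by auto
  ultimately show "continuous_on V (\<lambda>y. frechet_derivative f (at (y + c)) v)"
    using continuous_on_compose2[OF hol_dcont[OF h]] by blast
qed

lemma frechet_scaleR:
  assumes "hol U f" "x \<in> U"
  shows "frechet_derivative f (at x) (a *\<^sub>R w) = of_real a * frechet_derivative f (at x) w"
  using hol_clin[OF assms] cscale_of_real unfolding clin_def by metis

lemma hol_deriv:
  assumes h: "hol U f"
  shows "hol U (\<lambda>x. frechet_derivative f (at x) v)"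
proof (rule hol_local)
  show U: "open U" using h hol_open by blast
  fix x0 assume x0: "x0 \<in> U"
  obtain r2 where r2: "r2 > 0" "cball x0 r2 \<subseteq> U" using U x0 open_contains_cball by blast
  define r where "r = r2 / 2"
  have r: "r > 0" using r2 by (simp add: r_def)
  define V where "V = ball x0 r"
  have inK: "y + w \<in> cball x0 r2" if "y \<in> V" "norm w \<le> r" for y w
  proof -
    have "dist x0 (y + w) \<le> dist x0 y + dist y (y + w)" by (rule dist_triangle)
    moreover have "dist x0 y < r" using that unfolding V_def by auto
    moreover have "dist y (y + w) = norm w" by (simp add: dist_norm)
    ultimately show ?thesis using that unfolding r_def by simp
  qed
  have inU: "y + w \<in> U" if "y \<in> V" "norm w \<le> r" for y w
    using inK[OF that] r2 by auto
  have VU: "V \<subseteq> U" using inU[of _ 0] r by auto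
  define Df where "Df y = frechet_derivative f (at y)" for y
  define s where "s j = r / ((real j + 1) * (norm v + 1))" for j
  have nv: "norm v + 1 > 0" using norm_ge_zero[of v] by linarith
  have s_pos: "s j > 0" for j unfolding s_def using r nv by (intro divide_pos_pos mult_pos_pos) auto
  have s_le: "s j * norm v \<le> r / (real j + 1)" for j
  proof -
    have "s j * norm v = (r / (real j + 1)) * (norm v / (norm v + 1))" by (simp add: s_def)
    also have "\<dots> \<le> r / (real j + 1)"
    proof (rule mult_left_le)
      have p: "norm v + 1 > 0" using norm_ge_zero[of v] by linarith
      then show "norm v / (norm v + 1) \<le> 1" by (simp add: divide_le_eq_1)
      show "0 \<le> r / (real j + 1)" using r by simp
    qed
    finally show ?thesis .
  qed
  have sv_le: "norm (s j *\<^sub>R v) \<le> r" for j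
  proof -
    have "r / (real j + 1) \<le> r" using r by (simp add: divide_le_eq)
    then show ?thesis using s_le[of j] s_pos[of j] by simp
  qed
  define q where "q j y = (f (y + s j *\<^sub>R v) - f y) * of_real (1 / s j)" for j y
  have hq: "hol V (q j)" for j
    unfolding q_def
    by (intro hol_mult hol_diff hol_shift[OF h] hol_subset[OF h] hol_const)
       (use inU sv_le VU in \<open>auto simp: V_def\<close>)
  have uc: "uniformly_continuous_on (cball x0 r2) (\<lambda>y. Df y v)"
    unfolding Df_def
    by (intro compact_uniformly_continuous continuous_on_subset[OF hol_dcont[OF h] r2(2)]) simp
  have ul: "uniform_limit V q (\<lambda>y. Df y v) sequentially"
  proof (rule uniform_limitI)
    fix e :: real assume e: "e > 0"
    obtain \<delta> where \<delta>: "\<delta> > 0" "\<And>x x'. x \<in> cball x0 r2 \<Longrightarrow> x' \<in> cball x0 r2 \<Longrightarrow> dist x' x < \<delta> \<Longrightarrow>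
        dist (Df x' v) (Df x v) < e / 2"
      using uc e unfolding uniformly_continuous_on_def by (meson half_gt_zero)
    obtain N :: nat where N: "r / \<delta> < real N" using reals_Archimedean2 by blast
    show "\<forall>\<^sub>F j in sequentially. \<forall>y\<in>V. dist (q j y) (Df y v) < e"
      unfolding eventually_sequentially
    proof (intro exI[of _ N] allI impI ballI)
      fix j y assume j: "N \<le> j" and y: "y \<in> V"
      have "r / \<delta> < real j + 1" using N j by linarith
      then have "r < \<delta> * (real j + 1)" using \<delta>(1) by (simp add: divide_less_eq mult.commute)
      then have "r / (real j + 1) < \<delta>" by (simp add: divide_less_eq)
      then have sd: "s j * norm v < \<delta>" using s_le[of j] by linarith
      define \<phi> where "\<phi> t = f (y + (t * s j) *\<^sub>R v) - of_real (t * s j) * Df y v" for t :: real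
      define \<phi>' where "\<phi>' t = (\<lambda>h::real. of_real (h * s j) * (Df (y + (t * s j) *\<^sub>R v) v - Df y v))" for t
      have tin: "y + (t * s j) *\<^sub>R v \<in> U" if "t \<in> {0..1}" for t
      proof (rule inU[OF y])
        have "norm ((t * s j) *\<^sub>R v) = t * (s j * norm v)" using that s_pos[of j] by simp
        also have "\<dots> \<le> 1 * (s j * norm v)" using that s_pos[of j] by (intro mult_right_mono) auto
        finally show "norm ((t * s j) *\<^sub>R v) \<le> r" using s_le[of j] sv_le[of j] s_pos[of j] by simp
      qed
      have der: "(\<phi> has_derivative \<phi>' t) (at t)" if "t \<in> {0..1}" for t
      proof -
        have l: "((\<lambda>t. y + (t * s j) *\<^sub>R v) has_derivative (\<lambda>h. (h * s j) *\<^sub>R v)) (at t)"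
          by (auto intro!: derivative_eq_intros simp: algebra_simps)
        have "((\<lambda>t. f (y + (t * s j) *\<^sub>R v)) has_derivative (\<lambda>h. Df (y + (t * s j) *\<^sub>R v) ((h * s j) *\<^sub>R v))) (at t)"
          using diff_chain_at[OF l holD[OF h tin[OF that]]] by (simp add: o_def Df_def)
        moreover have "((\<lambda>t. of_real (t * s j) * Df y v) has_derivative (\<lambda>h. of_real (h * s j) * Df y v)) (at t)"
          by (auto intro!: derivative_eq_intros)
        ultimately have "(\<phi> has_derivative (\<lambda>h. Df (y + (t * s j) *\<^sub>R v) ((h * s j) *\<^sub>R v) - of_real (h * s j) * Df y v)) (at t)"
          unfolding \<phi>_def by (rule has_derivative_diff)
        moreover have "(\<lambda>h. Df (y + (t * s j) *\<^sub>R v) ((h * s j) *\<^sub>R v) - of_real (h * s j) * Df y v) = \<phi>' t"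
          unfolding \<phi>'_def Df_def using frechet_scaleR[OF h tin[OF that]]
          by (auto simp: fun_eq_iff algebra_simps)
        ultimately show ?thesis by simp
      qed
      have "\<exists>t\<in>{0<..<1}. norm (\<phi> 1 - \<phi> 0) \<le> norm (\<phi>' t (1 - 0))"
      proof (rule mvt_general)
        show "continuous_on {0..1} \<phi>"
          using der by (meson continuous_at_imp_continuous_on has_derivative_continuous)
        show "\<And>x. 0 < x \<Longrightarrow> x < 1 \<Longrightarrow> (\<phi> has_derivative \<phi>' x) (at x)" using der by auto
      qed simp
      then obtain t where t: "0 < t" "t < 1" "norm (\<phi> 1 - \<phi> 0) \<le> norm (\<phi>' t 1)" by auto
      have "dist (y + (t * s j) *\<^sub>R v) y < \<delta>"
      proof -
        have "dist (y + (t * s j) *\<^sub>R v) y = t * (s j * norm v)" using t s_pos[of j] by (simp add: dist_norm)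
        also have "\<dots> \<le> s j * norm v" using t s_pos[of j] by (simp add: mult_left_le_one_le)
        finally show ?thesis using sd by linarith
      qed
      moreover have "y + (t * s j) *\<^sub>R v \<in> cball x0 r2"
      proof (rule inK[OF y])
        have "norm ((t * s j) *\<^sub>R v) = t * (s j * norm v)" using t s_pos[of j] by simp
        also have "\<dots> \<le> s j * norm v" using t s_pos[of j] by (simp add: mult_left_le_one_le)
        finally show "norm ((t * s j) *\<^sub>R v) \<le> r" using sv_le[of j] s_pos[of j] by simp
      qed
      moreover have "y \<in> cball x0 r2" using inK[OF y, of 0] r by simp
      ultimately have close: "norm (Df (y + (t * s j) *\<^sub>R v) v - Df y v) < e / 2"
        using \<delta>(2) by (simp add: dist_norm)
      have "norm (\<phi>' t 1) = s j * norm (Df (y + (t * s j) *\<^sub>R v) v - Df y v)"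
        unfolding \<phi>'_def using s_pos[of j] by (simp add: norm_mult)
      also have "\<dots> \<le> s j * (e / 2)" using close s_pos[of j] by (intro mult_left_mono) auto
      finally have b1: "norm (\<phi> 1 - \<phi> 0) \<le> s j * (e / 2)" using t(3) by linarith
      have "\<phi> 1 - \<phi> 0 = (f (y + s j *\<^sub>R v) - f y) - of_real (s j) * Df y v"
        unfolding \<phi>_def by simp
      moreover have "q j y - Df y v = ((f (y + s j *\<^sub>R v) - f y) - of_real (s j) * Df y v) * of_real (1 / s j)"
        unfolding q_def using s_pos[of j] by (simp add: algebra_simps)
      ultimately have "norm (q j y - Df y v) = norm (\<phi> 1 - \<phi> 0) / s j"
        using s_pos[of j] by (simp add: norm_mult norm_divide)
      also have "\<dots> \<le> e / 2" using b1 s_pos[of j] by (simp add: divide_le_eq mult.commute)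
      also have "\<dots> < e" using e by simp
      finally show "dist (q j y) (Df y v) < e" by (simp add: dist_norm)
    qed
  qed
  have "hol V (\<lambda>y. Df y v)"
    by (rule hol_uniform_limit[OF _ hq ul]) (simp add: V_def)
  then show "\<exists>V. open V \<and> x0 \<in> V \<and> V \<subseteq> U \<and> hol V (\<lambda>x. frechet_derivative f (at x) v)"
    using VU r unfolding Df_def by (intro exI[of _ V]) (simp add: V_def)
qed

lemma Re_hol_deriv:
  assumes h: "hol V F" and V: "open V" and y: "y \<in> V" and eq: "\<And>y. y \<in> V \<Longrightarrow> u y = Re (F y) + c"
  shows "(u has_derivative (\<lambda>v. Re (frechet_derivative F (at y) v))) (at y)"
proof -
  have "((\<lambda>x. Re (F x)) has_derivative (\<lambda>v. Re (frechet_derivative F (at y) v))) (at y)"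
    by (rule bounded_linear.has_derivative[OF bounded_linear_Re holD[OF h y]])
  then have "((\<lambda>x. Re (F x) + c) has_derivative (\<lambda>v. Re (frechet_derivative F (at y) v))) (at y)"
    by (rule has_derivative_add_const)
  then show ?thesis by (rule has_derivative_transform_within_open[OF _ V y]) (simp add: eq)
qed

lemma pluriharmonicI_local:
  fixes u :: "complex^'n::finite \<Rightarrow> real"
  assumes U: "open U"
    and loc: "\<And>x. x \<in> U \<Longrightarrow> \<exists>V F c. open V \<and> x \<in> V \<and> V \<subseteq> U \<and> hol V F \<and> (\<forall>y\<in>V. u y = Re (F y) + c)"
  shows "pluriharmonic U u"
proof -
  define Du where "Du x = frechet_derivative u (at x)" for x
  define D2u where "D2u x w v = frechet_derivative (\<lambda>y. Du y v) (at x) w" for x w v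
  have L: "\<exists>V F. open V \<and> x \<in> V \<and> V \<subseteq> U \<and> hol V F \<and>
      (\<forall>y\<in>V. (u has_derivative Du y) (at y) \<and>
         (\<forall>v. ((\<lambda>y. Du y v) has_derivative (\<lambda>w. D2u y w v)) (at y)) \<and>
         (\<forall>v w. D2u y w v = Re (frechet_derivative (\<lambda>y. frechet_derivative F (at y) v) (at y) w)))"
    if x: "x \<in> U" for x
  proof -
    obtain V F c where V: "open V" "x \<in> V" "V \<subseteq> U" "hol V F" and eq: "\<And>y. y \<in> V \<Longrightarrow> u y = Re (F y) + c"
      using loc[OF x] by blast
    have du: "(u has_derivative (\<lambda>v. Re (frechet_derivative F (at y) v))) (at y)" if "y \<in> V" for y
      by (rule Re_hol_deriv[OF V(4) V(1) that eq])
    have Du_eq: "Du y = (\<lambda>v. Re (frechet_derivative F (at y) v))" if "y \<in> V" for y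
      unfolding Du_def using frechet_derivative_at[OF du[OF that]] by simp
    have d2: "((\<lambda>y. Du y v) has_derivative (\<lambda>w. Re (frechet_derivative (\<lambda>y. frechet_derivative F (at y) v) (at y) w))) (at y)"
      if "y \<in> V" for y v
      by (rule Re_hol_deriv[OF hol_deriv[OF V(4)] V(1) that, where c=0]) (simp add: Du_eq)
    have D2_eq: "D2u y w v = Re (frechet_derivative (\<lambda>y. frechet_derivative F (at y) v) (at y) w)"
      if "y \<in> V" for y v w
      unfolding D2u_def using fun_cong[OF frechet_derivative_at[OF d2[OF that, of v]], of w] by simp
    show ?thesis
    proof (intro exI[of _ V] exI[of _ F] conjI V ballI allI)
      fix y v w assume y: "y \<in> V"
      show "(u has_derivative Du y) (at y)" using du[OF y] Du_eq[OF y] by simp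
      show "((\<lambda>y. Du y v) has_derivative (\<lambda>w. D2u y w v)) (at y)"
        using d2[OF y, of v] D2_eq[OF y] by simp
      show "D2u y w v = Re (frechet_derivative (\<lambda>y. frechet_derivative F (at y) v) (at y) w)"
        by (rule D2_eq[OF y])
    qed
  qed
  show ?thesis unfolding pluriharmonic_def
  proof (intro conjI U exI[of _ Du] exI[of _ D2u] ballI allI)
    fix x v assume x: "x \<in> U"
    from L[OF x] show "(u has_derivative Du x) (at x)" by blast
    from L[OF x] show "((\<lambda>y. Du y v) has_derivative (\<lambda>w. D2u x w v)) (at x)" by blast
  next
    fix v w
    show "continuous_on U (\<lambda>x. D2u x w v)"
      unfolding continuous_on_eq_continuous_at[OF U]
    proof
      fix x assume x: "x \<in> U"
      obtain V F where V: "open V" "x \<in> V" "V \<subseteq> U" "hol V F"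
        and D2: "\<And>y. y \<in> V \<Longrightarrow> D2u y w v = Re (frechet_derivative (\<lambda>y. frechet_derivative F (at y) v) (at y) w)"
        using L[OF x] by blast
      have "continuous_on V (\<lambda>y. Re (frechet_derivative (\<lambda>y. frechet_derivative F (at y) v) (at y) w))"
        by (intro continuous_intros hol_dcont hol_deriv V(4))
      then have "continuous_on V (\<lambda>y. D2u y w v)" by (rule continuous_on_cong[THEN iffD1, rotated 2]) (simp_all add: D2)
      then show "isCont (\<lambda>x. D2u x w v) x" using continuous_on_eq_continuous_at[OF V(1)] V(2) by blast
    qed
  next
    fix x v assume x: "x \<in> U"
    obtain V F where V: "open V" "x \<in> V" "V \<subseteq> U" "hol V F"
      and D2: "\<And>y v w. y \<in> V \<Longrightarrow> D2u y w v = Re (frechet_derivative (\<lambda>y. frechet_derivative F (at y) v) (at y) w)"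
      using L[OF x] by blast
    define \<psi> where "\<psi> = (\<lambda>y. frechet_derivative F (at y) v)"
    have h\<psi>: "hol V \<psi>" unfolding \<psi>_def by (rule hol_deriv[OF V(4)])
    have "((\<lambda>y. \<i> * \<psi> y) has_derivative (\<lambda>w. \<i> * frechet_derivative \<psi> (at x) w)) (at x)"
      by (rule bounded_linear.has_derivative[OF bounded_linear_mult_right holD[OF h\<psi> V(2)]])
    moreover have "\<i> * \<psi> y = frechet_derivative F (at y) (cscale \<i> v)" if "y \<in> V" for y
      using hol_clin[OF V(4) that] unfolding clin_def \<psi>_def by simp
    ultimately have "((\<lambda>y. frechet_derivative F (at y) (cscale \<i> v)) has_derivative (\<lambda>w. \<i> * frechet_derivative \<psi> (at x) w)) (at x)"
      by (rule has_derivative_transform_within_open[OF _ V(1) V(2)])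
    then have e2: "frechet_derivative (\<lambda>y. frechet_derivative F (at y) (cscale \<i> v)) (at x) (cscale \<i> v)
        = \<i> * frechet_derivative \<psi> (at x) (cscale \<i> v)"
      using frechet_derivative_at by metis
    also have "\<dots> = \<i> * (\<i> * frechet_derivative \<psi> (at x) v)"
      using hol_clin[OF h\<psi> V(2)] unfolding clin_def by simp
    finally have "frechet_derivative (\<lambda>y. frechet_derivative F (at y) (cscale \<i> v)) (at x) (cscale \<i> v)
        = - frechet_derivative \<psi> (at x) v" by (simp add: mult.assoc[symmetric])
    then show "D2u x v v + D2u x (cscale \<i> v) (cscale \<i> v) = 0"
      using D2[OF V(2), of v v] D2[OF V(2), of "cscale \<i> v" "cscale \<i> v"] unfolding \<psi>_def by simp
  qed
qed

locale PS =
  fixes a :: "nat \<Rightarrow> complex" and \<alpha> :: "nat \<Rightarrow> (nat \<Rightarrow> nat) \<Rightarrow> complex"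
    and dt d :: nat and mt Mt :: real
    and S :: "nat \<Rightarrow> complex^'n::finite \<Rightarrow> complex^'n"
  assumes k3: "CARD('n) \<ge> 3"
    and ws: "weak_shift_like_seq CARD('n) dt a \<alpha> mt Mt"
    and dd: "d \<ge> dt + 2"
    and Sdef: "\<And>n. S n = pert_shift dt (a n) (\<alpha> n) d"
begin

lemma Mt_pos: "Mt > 0" and a_bound: "n \<ge> 1 \<Longrightarrow> norm (a n) < Mt"
  and al_bound: "n \<ge> 1 \<Longrightarrow> m \<in> multi_indices CARD('n) dt \<Longrightarrow> norm (\<alpha> n m) < Mt"
  and dt1: "dt \<ge> 1"
  using ws unfolding weak_shift_like_seq_def by auto

lemma d3: "d \<ge> 3" using dd dt1 by linarith

lemma S_low: "j \<in> {1..CARD('n) - 2} \<Longrightarrow> coord (S n w) j = coord w (j + 1)"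
  unfolding Sdef pert_shift_def by (subst coord_mkvec) auto

lemma S_km1: "coord (S n w) (CARD('n) - 1) = coord w CARD('n) + coord w 2 ^ (d - 1)"
  unfolding Sdef pert_shift_def using k3 by (subst coord_mkvec) auto

lemma S_k: "coord (S n w) CARD('n) = a n * coord w 1 + poly_p dt (\<alpha> n) w + (\<Sum>i=2..CARD('n). coord w i ^ d)"
  unfolding Sdef pert_shift_def using k3 by (subst coord_mkvec) auto

definition E :: "nat \<Rightarrow> complex^'n \<Rightarrow> complex" where
  "E n w = (a n * coord w 1 + poly_p dt (\<alpha> n) w + (\<Sum>i=2..CARD('n) - 1. coord w i ^ d)) / coord w CARD('n) ^ d"

lemma sum_split_k: "(\<Sum>i=2..CARD('n). f i) = (\<Sum>i=2..CARD('n) - 1. f i) + (f (CARD('n)) :: complex)"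
proof -
  have "CARD('n) = Suc (CARD('n) - 1)" using k3 by simp
  then have "{2..CARD('n)} = insert (CARD('n)) {2..CARD('n) - 1}" using k3 by auto
  moreover have "CARD('n) \<notin> {2..CARD('n) - 1}" using k3 by auto
  ultimately show ?thesis by (simp add: add.commute)
qed

lemma S_k_factor:
  assumes "coord w CARD('n) \<noteq> 0"
  shows "coord (S n w) CARD('n) = coord w CARD('n) ^ d * (1 + E n w)"
  unfolding S_k E_def using assms by (simp add: sum_split_k field_simps)

definition eps :: real where "eps = 1 / (2 * real CARD('n))"
definition CC :: real where "CC = real (card (multi_indices CARD('n) dt)) * Mt"
definition R :: real where "R = 8 * Mt + 8 * CC + 8 * real CARD('n) + 8"

lemma eps_pos: "eps > 0" and eps_le: "eps \<le> 1/2" and keps: "real CARD('n) * eps = 1/2"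
  unfolding eps_def using k3 by (auto simp: field_simps)

lemma CC_nonneg: "CC \<ge> 0" unfolding CC_def using Mt_pos by simp

lemma R_ge: "R \<ge> 8 * Mt" "R \<ge> 8 * CC" "R \<ge> 8 * real CARD('n) + 8" "R \<ge> 8"
  unfolding R_def using Mt_pos CC_nonneg by auto

definition V :: "(complex^'n) set" where
  "V = {w. R < norm (coord w CARD('n)) \<and> (\<forall>j\<in>{1..<CARD('n)}. norm (coord w j) < eps * norm (coord w CARD('n)))}"

lemma poly_bound:
  fixes w :: "complex^'n"
  assumes n: "n \<ge> 1" and t1: "1 \<le> norm (coord w CARD('n))"
    and le: "\<And>j. j \<in> {2..CARD('n)} \<Longrightarrow> norm (coord w j) \<le> norm (coord w CARD('n))"
  shows "norm (poly_p dt (\<alpha> n) w) \<le> CC * norm (coord w CARD('n)) ^ dt"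
proof -
  let ?t = "norm (coord w CARD('n))"
  have trm: "norm (\<alpha> n m * (\<Prod>j=2..CARD('n). coord w j ^ m j)) \<le> Mt * ?t ^ dt"
    if m: "m \<in> multi_indices CARD('n) dt" for m
  proof -
    have "norm (\<Prod>j=2..CARD('n). coord w j ^ m j) = (\<Prod>j=2..CARD('n). norm (coord w j) ^ m j)"
      by (simp add: prod_norm[symmetric] norm_power)
    also have "\<dots> \<le> (\<Prod>j=2..CARD('n). ?t ^ m j)"
      by (intro prod_mono conjI power_mono le) auto
    also have "\<dots> = ?t ^ (\<Sum>j=2..CARD('n). m j)" by (simp add: power_sum)
    also have "\<dots> \<le> ?t ^ dt"
      using m t1 unfolding multi_indices_def by (intro power_increasing) auto
    finally have p: "norm (\<Prod>j=2..CARD('n). coord w j ^ m j) \<le> ?t ^ dt" .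
    have "norm (\<alpha> n m * (\<Prod>j=2..CARD('n). coord w j ^ m j)) = norm (\<alpha> n m) * norm (\<Prod>j=2..CARD('n). coord w j ^ m j)"
      by (simp add: norm_mult)
    also have "\<dots> \<le> Mt * ?t ^ dt"
      using al_bound[OF n m] p Mt_pos by (intro mult_mono) auto
    finally show ?thesis .
  qed
  have "norm (poly_p dt (\<alpha> n) w) \<le> (\<Sum>m\<in>multi_indices CARD('n) dt. norm (\<alpha> n m * (\<Prod>j=2..CARD('n). coord w j ^ m j)))"
    unfolding poly_p_def by (rule norm_sum)
  also have "\<dots> \<le> of_nat (card (multi_indices CARD('n) dt)) * (Mt * ?t ^ dt)"
    by (rule sum_bounded_above) (rule trm)
  finally show ?thesis by (simp add: CC_def)
qed

lemma V_facts:
  fixes w :: "complex^'n"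
  assumes "w \<in> V"
  shows "R < norm (coord w CARD('n))" "\<And>j. j \<in> {1..<CARD('n)} \<Longrightarrow> norm (coord w j) < eps * norm (coord w CARD('n))"
  using assms unfolding V_def by auto

lemma pow_split: "(t::real) ^ d = t ^ (d - 1) * t"
proof -
  have "d = Suc (d - 1)" using d3 by simp
  then show ?thesis by (metis power_Suc2)
qed

lemma t_le_pow: "1 \<le> (t::real) \<Longrightarrow> t \<le> t ^ (d - 1)"
  using d3 by (intro self_le_power) auto

lemma V_le:
  fixes w :: "complex^'n"
  assumes "w \<in> V" "j \<in> {1..<CARD('n)}"
  shows "norm (coord w j) \<le> norm (coord w CARD('n))"
proof -
  have "norm (coord w j) < eps * norm (coord w CARD('n))" by (rule V_facts(2)[OF assms])
  also have "\<dots> \<le> norm (coord w CARD('n))" using eps_le eps_pos by (intro mult_left_le_one_le) auto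
  finally show ?thesis by simp
qed

lemma E_bound:
  fixes w :: "complex^'n"
  assumes w: "w \<in> V" and n: "n \<ge> 1"
  shows "norm (E n w) \<le> 3/8"
proof -
  let ?t = "norm (coord w CARD('n))"
  have tR: "R < ?t" using V_facts(1)[OF w] .
  then have t8: "?t \<ge> 8" using R_ge by linarith
  have lt: "norm (coord w j) < eps * ?t" if "j \<in> {1..<CARD('n)}" for j using V_facts(2)[OF w that] .
  have le: "norm (coord w j) \<le> ?t" if "j \<in> {2..CARD('n)}" for j
  proof (cases "j = CARD('n)")
    case False
    then have "j \<in> {1..<CARD('n)}" using that by auto
    then have "norm (coord w j) < eps * ?t" by (rule lt)
    also have "\<dots> \<le> ?t" using eps_le eps_pos t8 by (intro mult_left_le_one_le) auto
    finally show ?thesis by simp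
  qed simp
  have P: "norm (poly_p dt (\<alpha> n) w) \<le> CC * ?t ^ dt"
    by (rule poly_bound[OF n _ le]) (use t8 in auto)
  have A: "norm (a n * coord w 1) \<le> Mt * ?t"
  proof -
    have "norm (coord w 1) \<le> ?t" using V_le[OF w, of 1] k3 by auto
    then show ?thesis using a_bound[OF n] Mt_pos by (simp add: norm_mult) (intro mult_mono, auto)
  qed
  have H: "norm (\<Sum>i=2..CARD('n) - 1. coord w i ^ d) \<le> ?t ^ d / 8"
  proof -
    have "norm (\<Sum>i=2..CARD('n) - 1. coord w i ^ d) \<le> (\<Sum>i=2..CARD('n) - 1. norm (coord w i) ^ d)"
      by (rule order_trans[OF norm_sum]) (simp add: norm_power)
    also have "\<dots> \<le> (\<Sum>i=2..CARD('n) - 1. (eps * ?t) ^ d)"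
    proof (intro sum_mono power_mono)
      fix i assume "i \<in> {2..CARD('n) - 1}"
      then have "i \<in> {1..<CARD('n)}" using k3 by auto
      then show "norm (coord w i) \<le> eps * ?t" using lt less_imp_le by blast
    qed simp
    also have "\<dots> = real (CARD('n) - 1 - 1) * (eps * ?t) ^ d" by (simp add: numeral_2_eq_2)
    also have "\<dots> \<le> real CARD('n) * (eps * ?t) ^ d"
      using eps_pos by (intro mult_right_mono zero_le_power mult_nonneg_nonneg) auto
    also have "\<dots> = (real CARD('n) * eps) * eps ^ (d - 1) * ?t ^ d"
      by (simp add: power_mult_distrib pow_split[of eps])
    also have "\<dots> \<le> (1/2) * (1/2)^2 * ?t ^ d"
    proof -
      have "eps ^ (d - 1) \<le> eps ^ 2" using eps_pos eps_le d3 by (intro power_decreasing) auto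
      also have "\<dots> \<le> (1/2)^2" using eps_pos eps_le by (intro power_mono) auto
      finally have h: "eps ^ (d - 1) \<le> (1/2)^2" .
      have "(real CARD('n) * eps) * eps ^ (d - 1) \<le> (1/2) * (1/2)^2"
        unfolding keps using h by (intro mult_left_mono) auto
      then show ?thesis by (intro mult_right_mono) auto
    qed
    finally show ?thesis by (simp add: power2_eq_square)
  qed
  have t1: "?t \<ge> 1" using t8 by simp
  have A2: "Mt * ?t \<le> ?t ^ d / 8"
  proof -
    have "8 * Mt \<le> ?t ^ (d - 1)" using R_ge(1) tR t_le_pow[OF t1] by linarith
    then have "8 * Mt * ?t \<le> ?t ^ (d - 1) * ?t" using t1 by (intro mult_right_mono) auto
    then show ?thesis by (simp add: pow_split[of ?t])
  qed
  have P2: "CC * ?t ^ dt \<le> ?t ^ d / 8"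
  proof -
    have e: "?t ^ d = ?t ^ (d - dt) * ?t ^ dt" using dd by (simp add: power_add[symmetric])
    have "?t \<le> ?t ^ (d - dt)" using t1 dd by (intro self_le_power) auto
    moreover have "8 * CC \<le> ?t" using R_ge(2) tR by linarith
    ultimately have "8 * CC \<le> ?t ^ (d - dt)" by linarith
    then have "8 * CC * ?t ^ dt \<le> ?t ^ (d - dt) * ?t ^ dt" by (rule mult_right_mono) simp
    then show ?thesis unfolding e by linarith
  qed
  have num: "norm (a n * coord w 1 + poly_p dt (\<alpha> n) w + (\<Sum>i=2..CARD('n) - 1. coord w i ^ d)) \<le> 3/8 * ?t ^ d"
    using A P H A2 P2 norm_triangle_ineq[of "a n * coord w 1 + poly_p dt (\<alpha> n) w" "\<Sum>i=2..CARD('n) - 1. coord w i ^ d"]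
      norm_triangle_ineq[of "a n * coord w 1" "poly_p dt (\<alpha> n) w"] by linarith
  have tp: "?t ^ d > 0" using t1 by (intro zero_less_power) linarith
  show ?thesis unfolding E_def using num tp by (simp add: norm_divide norm_power divide_le_eq)
qed

lemma S_in_V:
  fixes w :: "complex^'n"
  assumes w: "w \<in> V" and n: "n \<ge> 1"
  shows "S n w \<in> V" "norm (coord w CARD('n)) ^ d / 2 \<le> norm (coord (S n w) CARD('n))"
    "2 * norm (coord w CARD('n)) \<le> norm (coord (S n w) CARD('n))"
    "\<And>j. j \<in> {1..<CARD('n)} \<Longrightarrow> norm (coord (S n w) j) \<le> (4 / norm (coord w CARD('n))) * norm (coord (S n w) CARD('n))"
proof -
  let ?t = "norm (coord w CARD('n))"
  let ?s = "norm (coord (S n w) CARD('n))"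
  have tR: "R < ?t" using V_facts(1)[OF w] .
  then have t8: "?t \<ge> 8" using R_ge by linarith
  have t1: "?t \<ge> 1" using t8 by simp
  have lt: "norm (coord w j) < eps * ?t" if "j \<in> {1..<CARD('n)}" for j using V_facts(2)[OF w that] .
  have nz: "coord w CARD('n) \<noteq> 0" using t8 by auto
  have E: "norm (E n w) \<le> 3/8" by (rule E_bound[OF w n])
  have "1 \<le> norm (1 + E n w) + norm (E n w)"
    using norm_triangle_ineq4[of "1 + E n w" "E n w"] by simp
  then have E1: "norm (1 + E n w) \<ge> 1/2" using E by linarith
  have s_eq: "?s = ?t ^ d * norm (1 + E n w)"
    by (simp add: S_k_factor[OF nz] norm_mult norm_power)
  have "?t ^ d * (1/2) \<le> ?t ^ d * norm (1 + E n w)" by (rule mult_left_mono[OF E1]) simp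
  then show sd: "?t ^ d / 2 \<le> ?s" unfolding s_eq by simp
  have tpow: "?t ^ d = ?t ^ (d - 1) * ?t" by (rule pow_split)
  have tt: "?t \<le> ?t ^ (d - 1)" by (rule t_le_pow[OF t1])
  have big: "4 * ?t \<le> ?t ^ d / 2"
  proof -
    have "8 * ?t \<le> ?t ^ (d - 1) * ?t" using tt t8 by (intro mult_right_mono) auto
    then show ?thesis using tpow by simp
  qed
  show "2 * ?t \<le> ?s" using big sd t1 by linarith
  have low: "norm (coord (S n w) j) \<le> 2 * ?t ^ (d - 1)" if j: "j \<in> {1..<CARD('n)}" for j
  proof (cases "j = CARD('n) - 1")
    case True
    have "norm (coord w 2) \<le> ?t" using V_le[OF w, of 2] k3 by auto
    then have "norm (coord w 2) ^ (d - 1) \<le> ?t ^ (d - 1)" by (intro power_mono) auto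
    then have "norm (coord w CARD('n) + coord w 2 ^ (d - 1)) \<le> ?t + ?t ^ (d - 1)"
      using norm_triangle_ineq[of "coord w CARD('n)" "coord w 2 ^ (d - 1)"] by (simp add: norm_power)
    then show ?thesis using True S_km1 tt by simp
  next
    case False
    then have j2: "j \<in> {1..CARD('n) - 2}" using j by auto
    have "j + 1 \<in> {1..<CARD('n)}" using j2 k3 by auto
    then have "norm (coord w (j + 1)) \<le> ?t" using V_le[OF w] by blast
    then show ?thesis using S_low[OF j2] tt t1 by simp
  qed
  show "norm (coord (S n w) j) \<le> (4 / ?t) * ?s" if j: "j \<in> {1..<CARD('n)}" for j
  proof -
    have "2 * ?t ^ (d - 1) = (4 / ?t) * (?t ^ (d - 1) * ?t / 2)" using t1 nz by (simp add: field_simps)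
    also have "\<dots> = (4 / ?t) * (?t ^ d / 2)" using tpow by simp
    also have "\<dots> \<le> (4 / ?t) * ?s" using sd t1 by (intro mult_left_mono) auto
    finally show ?thesis using low[OF j] by linarith
  qed
  have sR: "R < ?s" using big sd tR t1 by linarith
  have "norm (coord (S n w) j) < eps * ?s" if j: "j \<in> {1..<CARD('n)}" for j
  proof -
    have e4: "eps * ?t > 4"
    proof -
      have "8 * real CARD('n) < ?t" using R_ge(3) tR by linarith
      then have "4 * (2 * real CARD('n)) < ?t" by simp
      then show ?thesis unfolding eps_def using k3 by (simp add: field_simps)
    qed
    have "2 * ?t ^ (d - 1) < (eps * ?t / 2) * ?t ^ (d - 1)"
    proof (rule mult_strict_right_mono)
      show "0 < ?t ^ (d - 1)" using t1 by (intro zero_less_power) linarith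
    qed (use e4 in simp)
    also have "\<dots> = eps * (?t ^ d / 2)" using tpow by (simp add: field_simps)
    also have "\<dots> \<le> eps * ?s" using sd eps_pos by (intro mult_left_mono) auto
    finally show ?thesis using low[OF j] by linarith
  qed
  then show "S n w \<in> V" unfolding V_def using sR by auto
qed

end

lemma hol_if_const: "hol U A \<Longrightarrow> hol U B \<Longrightarrow> hol U (\<lambda>y. if P then A y else B y)"
  by (cases P) simp_all

lemma open_Collect_ball_finite:
  assumes "finite A" "\<And>j. j \<in> A \<Longrightarrow> open {y. P j y}"
  shows "open {y. \<forall>j\<in>A. P j y}"
proof -
  have "{y. \<forall>j\<in>A. P j y} = UNIV \<inter> (\<Inter>j\<in>A. {y. P j y})" by auto
  then show ?thesis using assms by (metis open_INT open_Int open_UNIV)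
qed

context PS
begin

definition orb :: "nat \<Rightarrow> complex^'n \<Rightarrow> complex^'n" where "orb n y = Scomp S n y"

lemma orb_0 [simp]: "orb 0 y = y" by (simp add: orb_def)
lemma orb_Suc: "orb (Suc n) y = S (Suc n) (orb n y)" by (simp add: orb_def)

lemma hol_S_comp:
  fixes g :: "complex^'n \<Rightarrow> complex^'n"
  assumes U: "open U" and hg: "\<And>j. hol U (\<lambda>y. coord (g y) j)"
  shows "hol U (\<lambda>y. coord (S m (g y)) j)"
  unfolding Sdef pert_shift_def coord_mkvec' poly_p_def
  by (intro hol_if_const hol_add hol_mult hol_power hol_sum hol_prod hol_const U hg)

lemma hol_orb: "hol UNIV (\<lambda>y. coord (orb n y :: complex^'n) j)"
proof (induction n arbitrary: j)
  case 0 then show ?case by (simp add: hol_coord)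
next
  case (Suc n) then show ?case unfolding orb_Suc by (intro hol_S_comp) auto
qed

lemma cont_orb: "continuous_on UNIV (\<lambda>y. coord (orb n y :: complex^'n) j)"
  by (rule hol_cont[OF hol_orb])

definition W :: "nat \<Rightarrow> (complex^'n) set" where "W N = {y. orb N y \<in> V}"

lemma open_W: "open (W N)"
proof -
  have "W N = {y. R < norm (coord (orb N y) CARD('n)) \<and>
      (\<forall>j\<in>{1..<CARD('n)}. norm (coord (orb N y) j) < eps * norm (coord (orb N y) CARD('n)))}"
    unfolding W_def V_def by simp
  also have "open \<dots>"
    by (intro open_Collect_conj open_Collect_less open_Collect_ball_finite continuous_intros cont_orb) auto
  finally show ?thesis .
qed

lemma orb_V: "orb N y \<in> V \<Longrightarrow> orb (N + m) y \<in> V"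
proof (induction m)
  case 0 then show ?case by simp
next
  case (Suc m)
  then have "orb (N + m) y \<in> V" by simp
  then show ?case using S_in_V(1)[of "orb (N + m) y" "Suc (N + m)"] by (simp add: orb_Suc)
qed

lemma W_mono: "N \<le> M \<Longrightarrow> W N \<subseteq> W M"
  unfolding W_def using orb_V by (metis (mono_tags, lifting) Collect_mono le_add_diff_inverse)

lemma orb_grow: "orb N y \<in> V \<Longrightarrow> 2 ^ m * norm (coord (orb N y) CARD('n)) \<le> norm (coord (orb (N + m) y) CARD('n))"
proof (induction m)
  case 0 then show ?case by simp
next
  case (Suc m)
  have v: "orb (N + m) y \<in> V" using orb_V[OF Suc.prems] .
  have "2 ^ Suc m * norm (coord (orb N y) CARD('n)) \<le> 2 * norm (coord (orb (N + m) y) CARD('n))"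
    using Suc by simp
  also have "\<dots> \<le> norm (coord (orb (N + Suc m) y) CARD('n))"
    using S_in_V(3)[OF v, of "Suc (N + m)"] by (simp add: orb_Suc)
  finally show ?case .
qed

lemma orb_grow_R: "orb N y \<in> V \<Longrightarrow> 2 ^ m * R \<le> norm (coord (orb (N + m) y) CARD('n))"
  using orb_grow[of N y m] V_facts(1)[of "orb N y"]
  by (smt (verit, best) mult_left_mono zero_le_power zero_le_numeral)

end

context PS
begin

lemma R_pos: "R > 0" using R_ge(4) by linarith

lemma Uplus_orb: "Uplus S = {z. eventually (\<lambda>n. coord (orb n z) CARD('n) \<noteq> 0) sequentially \<and>
      (\<forall>j\<in>{1..<CARD('n)}. ((\<lambda>n. coord (orb n z) j / coord (orb n z) CARD('n)) \<longlongrightarrow> 0) sequentially) \<and>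
      ((\<lambda>n. 1 / coord (orb n z) CARD('n)) \<longlongrightarrow> 0) sequentially}"
  unfolding Uplus_def orb_def ..

lemma in_Uplus:
  assumes y: "orb N y \<in> V"
  shows "y \<in> Uplus S"
proof -
  define g where "g n = (8 * 2 ^ N / R) * (1/2 :: real) ^ n" for n
  have g0: "g \<longlonglongrightarrow> 0" unfolding g_def by (intro tendsto_mult_right_zero LIMSEQ_power_zero) simp
  have ck: "2 ^ m * R \<le> norm (coord (orb (N + m) y) CARD('n))" for m by (rule orb_grow_R[OF y])
  have p: "0 < 2 ^ m * R" for m :: nat using R_pos by simp
  have gm1: "1 / (2 ^ m * R) \<le> g (N + m)" for m
  proof -
    have "g (N + m) = 8 / (2 ^ m * R)" unfolding g_def using R_pos by (simp add: power_add field_simps)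
    then show ?thesis using p[of m] by (simp add: divide_right_mono)
  qed
  have gm2: "4 / (2 ^ m * R) = g (Suc (N + m))" for m
    unfolding g_def using R_pos by (simp add: power_add field_simps)
  have cb: "norm (coord (orb (N + m) y) CARD('n)) > 0" for m using ck[of m] p[of m] by linarith
  have ev_nz: "eventually (\<lambda>n. coord (orb n y) CARD('n) \<noteq> 0) sequentially"
    unfolding eventually_sequentially
  proof (intro exI[of _ N] allI impI)
    fix n assume "N \<le> n"
    then obtain m where "n = N + m" using le_Suc_ex by blast
    then show "coord (orb n y) CARD('n) \<noteq> 0" using cb[of m] by auto
  qed
  have inv0: "((\<lambda>n. 1 / coord (orb n y) CARD('n)) \<longlongrightarrow> 0) sequentially"
  proof (rule Lim_null_comparison[OF _ g0])
    show "\<forall>\<^sub>F n in sequentially. norm (1 / coord (orb n y) CARD('n)) \<le> g n"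
      unfolding eventually_sequentially
    proof (intro exI[of _ N] allI impI)
      fix n assume "N \<le> n"
      then obtain m where n: "n = N + m" using le_Suc_ex by blast
      have "norm (1 / coord (orb n y) CARD('n)) = 1 / norm (coord (orb n y) CARD('n))"
        by (simp add: norm_divide)
      also have "\<dots> \<le> 1 / (2 ^ m * R)" using ck[of m] p[of m] cb[of m] n by (intro divide_left_mono) (auto intro: mult_pos_pos)
      also have "\<dots> \<le> g n" using gm1[of m] n by simp
      finally show "norm (1 / coord (orb n y) CARD('n)) \<le> g n" .
    qed
  qed
  have rat0: "((\<lambda>n. coord (orb n y) j / coord (orb n y) CARD('n)) \<longlongrightarrow> 0) sequentially"
    if j: "j \<in> {1..<CARD('n)}" for j
  proof (rule Lim_null_comparison[OF _ g0])
    show "\<forall>\<^sub>F n in sequentially. norm (coord (orb n y) j / coord (orb n y) CARD('n)) \<le> g n"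
      unfolding eventually_sequentially
    proof (intro exI[of _ "Suc N"] allI impI)
      fix n assume "Suc N \<le> n"
      then obtain m where n: "n = Suc (N + m)" using le_Suc_ex by (metis add_Suc)
      have v: "orb (N + m) y \<in> V" by (rule orb_V[OF y])
      have o: "orb n y = S (Suc (N + m)) (orb (N + m) y)" using n by (simp add: orb_Suc)
      let ?t = "norm (coord (orb (N + m) y) CARD('n))"
      let ?s = "norm (coord (orb n y) CARD('n))"
      have b: "norm (coord (orb n y) j) \<le> (4 / ?t) * ?s"
        using S_in_V(4)[OF v _ j, of "Suc (N + m)"] o by simp
      have spos: "?s > 0" using cb[of "Suc m"] n by simp
      have "norm (coord (orb n y) j / coord (orb n y) CARD('n)) = norm (coord (orb n y) j) / ?s"
        by (simp add: norm_divide)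
      also have "\<dots> \<le> 4 / ?t" using b spos by (simp add: divide_le_eq)
      also have "\<dots> \<le> 4 / (2 ^ m * R)" using ck[of m] p[of m] cb[of m] by (intro divide_left_mono) (auto intro: mult_pos_pos)
      also have "\<dots> = g n" using gm2[of m] n by simp
      finally show "norm (coord (orb n y) j / coord (orb n y) CARD('n)) \<le> g n" .
    qed
  qed
  show ?thesis unfolding Uplus_orb using ev_nz inv0 rat0 by blast
qed

lemma Uplus_in:
  assumes y: "y \<in> Uplus S"
  shows "\<exists>N. orb N y \<in> V"
proof -
  have ev1: "eventually (\<lambda>n. coord (orb n y) CARD('n) \<noteq> 0) sequentially" using y unfolding Uplus_orb by blast
  have ev2: "eventually (\<lambda>n. \<forall>j\<in>{1..<CARD('n)}. norm (coord (orb n y) j / coord (orb n y) CARD('n)) < eps) sequentially"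
  proof (rule eventually_ball_finite[OF finite_atLeastLessThan], rule ballI)
    fix j assume "j \<in> {1..<CARD('n)}"
    then have "((\<lambda>n. coord (orb n y) j / coord (orb n y) CARD('n)) \<longlongrightarrow> 0) sequentially"
      using y unfolding Uplus_orb by blast
    from tendstoD[OF this eps_pos]
    show "eventually (\<lambda>n. norm (coord (orb n y) j / coord (orb n y) CARD('n)) < eps) sequentially"
      by (simp add: dist_norm)
  qed
  have "((\<lambda>n. 1 / coord (orb n y) CARD('n)) \<longlongrightarrow> 0) sequentially" using y unfolding Uplus_orb by blast
  from tendstoD[OF this, of "1 / R"] R_pos
  have ev3: "eventually (\<lambda>n. norm (1 / coord (orb n y) CARD('n)) < 1 / R) sequentially"
    by (simp add: dist_norm)
  obtain N where N: "coord (orb N y) CARD('n) \<noteq> 0"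
      "\<forall>j\<in>{1..<CARD('n)}. norm (coord (orb N y) j / coord (orb N y) CARD('n)) < eps"
      "norm (1 / coord (orb N y) CARD('n)) < 1 / R"
    using eventually_happens'[OF sequentially_bot eventually_conj[OF ev1 eventually_conj[OF ev2 ev3]]] by blast
  have np: "norm (coord (orb N y) CARD('n)) > 0" using N(1) by simp
  have "R < norm (coord (orb N y) CARD('n))"
    using N(3) np R_pos by (simp add: norm_divide divide_less_eq field_simps)
  moreover have "norm (coord (orb N y) j) < eps * norm (coord (orb N y) CARD('n))" if "j \<in> {1..<CARD('n)}" for j
    using N(2) that np by (simp add: norm_divide divide_less_eq)
  ultimately show ?thesis unfolding V_def by blast
qed

lemma Uplus_W: "Uplus S = (\<Union>N. W N)"
  unfolding W_def using in_Uplus Uplus_in by blast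

lemma open_Uplus: "open (Uplus S)"
  unfolding Uplus_W by (intro open_UN ballI open_W)

end

lemma uniform_limit_shift:
  assumes "uniform_limit S (\<lambda>n. f (n + N)) l sequentially"
  shows "uniform_limit S f l sequentially"
proof (rule uniform_limitI)
  fix e :: real assume e: "e > 0"
  from uniform_limitD[OF assms e] obtain M where M: "\<forall>n\<ge>M. \<forall>x\<in>S. dist (f (n + N) x) (l x) < e"
    unfolding eventually_sequentially by blast
  show "\<forall>\<^sub>F n in sequentially. \<forall>x\<in>S. dist (f n x) (l x) < e"
    unfolding eventually_sequentially
  proof (intro exI[of _ "M + N"] allI impI)
    fix n assume n: "M + N \<le> n"
    then have "n - N \<ge> M" "n - N + N = n" by auto
    then show "\<forall>x\<in>S. dist (f n x) (l x) < e" using M by metis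
  qed
qed

lemma abs_ln_le1:
  assumes "5/8 \<le> (x::real)" "x \<le> 11/8"
  shows "\<bar>ln x\<bar> \<le> 1"
proof -
  have xp: "x > 0" using assms by simp
  have "ln x \<le> x - 1" by (rule ln_le_minus_one[OF xp])
  moreover have "ln (inverse x) \<le> inverse x - 1" using xp by (intro ln_le_minus_one) simp
  moreover have "inverse x \<le> inverse (5/8)" by (rule le_imp_inverse_le) (use assms in auto)
  ultimately show ?thesis using assms by (simp add: ln_inverse)
qed

context PS
begin

definition Gf :: "nat \<Rightarrow> complex^'n \<Rightarrow> real" where
  "Gf n y = log_plus (supnorm (orb n y)) / real d ^ n"
definition T :: "nat \<Rightarrow> complex^'n \<Rightarrow> real" where
  "T n y = ln (norm (coord (orb n y) CARD('n))) / real d ^ n"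
definition Dt :: "nat \<Rightarrow> nat \<Rightarrow> complex^'n \<Rightarrow> real" where
  "Dt N i y = ln (norm (1 + E (Suc (N + i)) (orb (N + i) y))) / real d ^ Suc (N + i)"
definition L :: "nat \<Rightarrow> complex^'n \<Rightarrow> real" where
  "L N y = T N y + (\<Sum>i. Dt N i y)"
definition Gt :: "complex^'n \<Rightarrow> real" where
  "Gt y = lim (\<lambda>n. Gf n y)"

lemma G_eq_T:
  assumes "orb n y \<in> V" shows "Gf n y = T n y"
proof -
  have s: "supnorm (orb n y) = norm (coord (orb n y) CARD('n))"
    by (rule supnorm_eq) (use V_le[OF assms] in blast)
  have "R < norm (coord (orb n y) CARD('n))" by (rule V_facts(1)[OF assms])
  then have "ln (norm (coord (orb n y) CARD('n))) > 0" using R_ge(4) by (intro ln_gt_zero) linarith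
  then show ?thesis unfolding Gf_def T_def log_plus_def s by simp
qed

lemma E1_bounds:
  fixes w :: "complex^'n"
  assumes "w \<in> V" "n \<ge> 1"
  shows "5/8 \<le> norm (1 + E n w)" "norm (1 + E n w) \<le> 11/8"
proof -
  have E: "norm (E n w) \<le> 3/8" by (rule E_bound[OF assms])
  have "1 \<le> norm (1 + E n w) + norm (E n w)"
    using norm_triangle_ineq4[of "1 + E n w" "E n w"] by simp
  then show "5/8 \<le> norm (1 + E n w)" using E by linarith
  show "norm (1 + E n w) \<le> 11/8" using norm_triangle_ineq[of 1 "E n w"] E by simp
qed

lemma d_pos: "real d > 0" using d3 by simp

lemma T_step:
  assumes y: "orb N y \<in> V"
  shows "T (Suc (N + i)) y = T (N + i) y + Dt N i y"
proof -
  define w where "w = orb (N + i) y"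
  have w: "w \<in> V" unfolding w_def by (rule orb_V[OF y])
  define c where "c = coord w CARD('n)"
  have cR: "R < norm c" unfolding c_def by (rule V_facts(1)[OF w])
  have nz: "c \<noteq> 0" using cR R_pos by auto
  have o: "orb (Suc (N + i)) y = S (Suc (N + i)) w" by (simp add: orb_Suc w_def)
  have e: "coord (orb (Suc (N + i)) y) CARD('n) = c ^ d * (1 + E (Suc (N + i)) w)"
    unfolding o c_def by (rule S_k_factor) (use nz c_def in simp)
  have b: "norm (1 + E (Suc (N + i)) w) \<ge> 5/8" by (rule E1_bounds(1)[OF w]) simp
  have "ln (norm (coord (orb (Suc (N + i)) y) CARD('n))) = real d * ln (norm c) + ln (norm (1 + E (Suc (N + i)) w))"
  proof -
    have nz2: "1 + E (Suc (N + i)) w \<noteq> 0" using b by auto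
    then show ?thesis unfolding e using nz by (simp add: norm_mult norm_power ln_mult ln_realpow)
  qed
  then show ?thesis unfolding T_def Dt_def w_def[symmetric] c_def[symmetric] using d_pos
    by (simp add: field_simps)
qed

lemma T_sum:
  assumes y: "orb N y \<in> V"
  shows "T (N + n) y = T N y + (\<Sum>i<n. Dt N i y)"
proof (induction n)
  case 0 then show ?case by simp
next
  case (Suc n) then show ?case using T_step[OF y, of n] by simp
qed

lemma Dt_bound:
  assumes y: "orb N y \<in> V"
  shows "norm (Dt N i y) \<le> (1/2) ^ Suc i"
proof -
  have w: "orb (N + i) y \<in> V" by (rule orb_V[OF y])
  have l: "\<bar>ln (norm (1 + E (Suc (N + i)) (orb (N + i) y)))\<bar> \<le> 1"
    by (rule abs_ln_le1) (use E1_bounds[OF w, of "Suc (N + i)"] in auto)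
  have "(2::real) ^ Suc i \<le> real d ^ Suc i" using d3 by (intro power_mono) auto
  also have "\<dots> \<le> real d ^ Suc (N + i)" using d3 by (intro power_increasing) auto
  finally have dp: "(2::real) ^ Suc i \<le> real d ^ Suc (N + i)" .
  have "norm (Dt N i y) = \<bar>ln (norm (1 + E (Suc (N + i)) (orb (N + i) y)))\<bar> / real d ^ Suc (N + i)"
    unfolding Dt_def by simp
  also have "\<dots> \<le> 1 / real d ^ Suc (N + i)" using l d_pos by (intro divide_right_mono) auto
  also have "\<dots> \<le> 1 / 2 ^ Suc i"
  proof -
    have dpos: "0 < real d ^ Suc (N + i)" using d_pos by simp
    show ?thesis using dp dpos by (intro divide_left_mono mult_pos_pos) auto
  qed
  finally show ?thesis by (simp add: power_divide)
qed

lemma half_summable: "summable (\<lambda>i. (1/2 :: real) ^ Suc i)"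
  using summable_mult[OF summable_geometric[of "1/2 :: real"], of "1/2"] by simp

lemma half_suminf: "(\<Sum>i. (1/2 :: real) ^ Suc i) = 1"
proof -
  have "(\<Sum>i. (1/2 :: real) ^ Suc i) = (1/2) * (\<Sum>i. (1/2 :: real) ^ i)"
    using suminf_mult[OF summable_geometric[of "1/2 :: real"], of "1/2"] by simp
  also have "\<dots> = 1" by (simp add: suminf_geometric)
  finally show ?thesis .
qed

lemma ul_W: "uniform_limit (W N) Gf (L N) sequentially"
proof (rule uniform_limit_shift[where N=N])
  have ms: "uniform_limit (W N) (\<lambda>n y. \<Sum>i<n. Dt N i y) (\<lambda>y. \<Sum>i. Dt N i y) sequentially"
    by (rule Weierstrass_m_test[OF _ half_summable]) (use Dt_bound in \<open>auto simp: W_def\<close>)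
  show "uniform_limit (W N) (\<lambda>n. Gf (n + N)) (L N) sequentially"
  proof (rule uniform_limitI)
    fix e :: real assume e: "e > 0"
    show "\<forall>\<^sub>F n in sequentially. \<forall>y\<in>W N. dist (Gf (n + N) y) (L N y) < e"
      using uniform_limitD[OF ms e]
    proof eventually_elim
      case (elim n)
      show ?case
      proof
        fix y assume y: "y \<in> W N"
        then have yv: "orb N y \<in> V" by (simp add: W_def)
        have "Gf (n + N) y = T N y + (\<Sum>i<n. Dt N i y)"
          using G_eq_T[OF orb_V[OF yv, of n]] T_sum[OF yv, of n] by (simp add: add.commute)
        then show "dist (Gf (n + N) y) (L N y) < e" using elim y by (simp add: L_def dist_real_def)
      qed
    qed
  qed
qed

lemma Gt_W: "y \<in> W N \<Longrightarrow> Gt y = L N y"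
  unfolding Gt_def using tendsto_uniform_limitI[OF ul_W] by (simp add: limI)

lemma ul_Gt: "uniform_limit (W N) Gf Gt sequentially"
  using ul_W by (rule uniform_limit_cong'[THEN iffD1, rotated 2]) (auto simp: Gt_W)

lemma L_bound: "y \<in> W N \<Longrightarrow> \<bar>L N y - T N y\<bar> \<le> 1"
proof -
  assume y: "y \<in> W N"
  then have yv: "orb N y \<in> V" by (simp add: W_def)
  have s: "summable (\<lambda>i. norm (Dt N i y))"
    by (rule summable_comparison_test'[OF half_summable]) (use Dt_bound[OF yv] in auto)
  have "\<bar>\<Sum>i. Dt N i y\<bar> \<le> (\<Sum>i. norm (Dt N i y))"
    using summable_norm[OF s] by simp
  also have "\<dots> \<le> (\<Sum>i. (1/2 :: real) ^ Suc i)"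
    by (rule suminf_le[OF _ s half_summable]) (use Dt_bound[OF yv] in auto)
  finally show ?thesis unfolding L_def half_suminf by simp
qed

end

lemma Ln_holo_ball: "Ln holomorphic_on ball 1 1"
proof (rule holomorphic_on_Ln, rule equals0I)
  fix z :: complex assume "z \<in> ball 1 1 \<inter> \<real>\<^sub>\<le>\<^sub>0"
  then have z: "dist 1 z < 1" "z \<in> \<real>\<^sub>\<le>\<^sub>0" by auto
  then have "Re z \<le> 0" by (simp add: complex_nonpos_Reals_iff)
  moreover have "\<bar>Re (1 - z)\<bar> \<le> norm (1 - z)" by (rule abs_Re_le_cmod)
  moreover have "norm (1 - z) < 1" using z by (simp add: dist_norm)
  ultimately show False by simp
qed

lemma one_plus_nz: "norm (e::complex) < 1 \<Longrightarrow> 1 + e \<noteq> 0"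
proof
  assume n: "norm e < 1" and "1 + e = 0"
  then have "e = -1" by (metis add.commute add_eq_0_iff)
  then show False using n by simp
qed

lemma Re_times_real: "Re (z * complex_of_real r) = Re z * r" by simp

lemma inverse_holo: "inverse holomorphic_on (- {0 :: complex})"
  using holomorphic_on_inverse[OF holomorphic_on_id[of "- {0 :: complex}"]] by (simp add: id_def)

context PS
begin

lemma dpow_bound: "1 / real d ^ Suc (N + i) \<le> (1/2) ^ Suc i"
proof -
  have "(2::real) ^ Suc i \<le> real d ^ Suc i" using d3 by (intro power_mono) auto
  also have "\<dots> \<le> real d ^ Suc (N + i)" using d3 by (intro power_increasing) auto
  finally have dp: "(2::real) ^ Suc i \<le> real d ^ Suc (N + i)" .
  have dpos: "0 < real d ^ Suc (N + i)" using d_pos by simp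
  have "1 / real d ^ Suc (N + i) \<le> 1 / 2 ^ Suc i" using dp dpos by (intro divide_left_mono mult_pos_pos) auto
  then show ?thesis by (simp add: power_divide)
qed

lemma hol_E: "open U \<Longrightarrow> (\<And>y. y \<in> U \<Longrightarrow> coord (orb M y) CARD('n) \<noteq> 0) \<Longrightarrow>
    hol U (\<lambda>y. E m (orb M y))"
proof -
  assume U: "open U" and nz: "\<And>y. y \<in> U \<Longrightarrow> coord (orb M y) CARD('n) \<noteq> 0"
  have ho: "hol U (\<lambda>y. coord (orb M y) j)" for j by (rule hol_subset[OF hol_orb U]) simp
  have hn: "hol U (\<lambda>y. a m * coord (orb M y) 1 + poly_p dt (\<alpha> m) (orb M y) + (\<Sum>i=2..CARD('n) - 1. coord (orb M y) i ^ d))"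
    unfolding poly_p_def by (intro hol_add hol_mult hol_power hol_sum hol_prod hol_const U ho)
  have hi: "hol U (\<lambda>y. inverse (coord (orb M y) CARD('n) ^ d))"
    by (rule hol_compose[OF hol_power[OF ho] inverse_holo]) (use nz in auto)
  show ?thesis unfolding E_def
    by (rule hol_cong[OF hol_mult[OF hn hi]]) (simp add: divide_inverse)
qed

lemma local_rep:
  assumes x0: "x0 \<in> W N"
  shows "\<exists>Ob F c. open Ob \<and> x0 \<in> Ob \<and> Ob \<subseteq> W N \<and> hol Ob F \<and> (\<forall>y\<in>Ob. Gt y = Re (F y) + c)"
proof -
  define c0 where "c0 = coord (orb N x0) CARD('n)"
  have x0v: "orb N x0 \<in> V" using x0 by (simp add: W_def)
  have c0nz: "c0 \<noteq> 0" using V_facts(1)[OF x0v] R_pos unfolding c0_def by auto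
  define Ob where "Ob = W N \<inter> {y. norm (coord (orb N y) CARD('n) / c0 - 1) < 1}"
  have openOb: "open Ob" unfolding Ob_def using c0nz
    by (intro open_Int open_W open_Collect_less continuous_intros cont_orb) auto
  have x0Ob: "x0 \<in> Ob" unfolding Ob_def using x0 c0nz by (simp add: c0_def)
  have ObW: "Ob \<subseteq> W N" unfolding Ob_def by auto
  have Ov: "orb (N + i) y \<in> V" if "y \<in> Ob" for y i using orb_V ObW that by (auto simp: W_def)
  have nzO: "coord (orb (N + i) y) CARD('n) \<noteq> 0" if "y \<in> Ob" for y i
    using V_facts(1)[OF Ov[OF that, of i]] R_pos by auto
  define tm where "tm i y = Ln (1 + E (Suc (N + i)) (orb (N + i) y)) * of_real (1 / real d ^ Suc (N + i))" for i y
  define f0 where "f0 y = Ln (coord (orb N y) CARD('n) / c0) * of_real (1 / real d ^ N)" for y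
  define \<Phi> where "\<Phi> n y = f0 y + (\<Sum>i<n. tm i y)" for n y
  define F where "F y = f0 y + (\<Sum>i. tm i y)" for y
  have Eb: "norm (E (Suc (N + i)) (orb (N + i) y)) \<le> 3/8" if "y \<in> Ob" for i y
    by (rule E_bound[OF Ov[OF that]]) simp
  have tmb: "norm (tm i y) \<le> (1/2) ^ Suc i" if "y \<in> Ob" for i y
  proof -
    have "norm (Ln (1 + E (Suc (N + i)) (orb (N + i) y))) \<le> 2 * norm (E (Suc (N + i)) (orb (N + i) y))"
      by (rule norm_Ln_le) (use Eb[OF that, of i] in simp)
    also have "\<dots> \<le> 1" using Eb[OF that, of i] by simp
    finally have l: "norm (Ln (1 + E (Suc (N + i)) (orb (N + i) y))) \<le> 1" .
    have "norm (tm i y) = norm (Ln (1 + E (Suc (N + i)) (orb (N + i) y))) * (1 / real d ^ Suc (N + i))"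
      unfolding tm_def norm_mult norm_of_real using d_pos by simp
    also have "\<dots> \<le> 1 * (1 / real d ^ Suc (N + i))" using l d_pos by (intro mult_right_mono) auto
    also have "\<dots> \<le> (1/2) ^ Suc i" using dpow_bound by simp
    finally show ?thesis .
  qed
  have hf0: "hol Ob f0"
  proof -
    have h1: "hol Ob (\<lambda>y. coord (orb N y) CARD('n) / c0)"
      by (rule hol_cong[OF hol_mult[OF hol_subset[OF hol_orb openOb] hol_const[OF openOb]]])
         (auto simp: divide_inverse)
    have "hol Ob (\<lambda>y. Ln (coord (orb N y) CARD('n) / c0))"
      by (rule hol_compose[OF h1 Ln_holo_ball]) (auto simp: Ob_def dist_norm norm_minus_commute)
    then show ?thesis unfolding f0_def by (intro hol_mult hol_const openOb)
  qed
  have htm: "hol Ob (tm i)" for i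
  proof -
    have h1: "hol Ob (\<lambda>y. 1 + E (Suc (N + i)) (orb (N + i) y))"
      by (intro hol_add hol_const openOb hol_E) (use nzO in auto)
    have "hol Ob (\<lambda>y. Ln (1 + E (Suc (N + i)) (orb (N + i) y)))"
    proof (rule hol_compose[OF h1 Ln_holo_ball])
      fix y assume "y \<in> Ob"
      then show "1 + E (Suc (N + i)) (orb (N + i) y) \<in> ball 1 1" using Eb[of y i] by (simp add: dist_norm)
    qed simp
    then show ?thesis unfolding tm_def by (intro hol_mult hol_const openOb)
  qed
  have hPhi: "hol Ob (\<Phi> n)" for n
    unfolding \<Phi>_def by (intro hol_add hf0 hol_sum openOb htm)
  have ms: "uniform_limit Ob (\<lambda>n y. \<Sum>i<n. tm i y) (\<lambda>y. \<Sum>i. tm i y) sequentially"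
    by (rule Weierstrass_m_test[OF _ half_summable]) (rule tmb)
  have ulPhi: "uniform_limit Ob \<Phi> F sequentially"
  proof (rule uniform_limitI)
    fix e :: real assume e: "e > 0"
    show "\<forall>\<^sub>F n in sequentially. \<forall>y\<in>Ob. dist (\<Phi> n y) (F y) < e"
      using uniform_limitD[OF ms e] by eventually_elim (simp add: \<Phi>_def F_def dist_norm)
  qed
  have hF: "hol Ob F" by (rule hol_uniform_limit[OF openOb hPhi ulPhi])
  have rep: "Gt y = Re (F y) + ln (norm c0) / real d ^ N" if y: "y \<in> Ob" for y
  proof -
    have yW: "y \<in> W N" using ObW y by auto
    have st: "summable (\<lambda>i. tm i y)"
      by (rule summable_comparison_test'[OF half_summable]) (rule tmb[OF y])
    have ReT: "Re (tm i y) = Dt N i y" for i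
    proof -
      have "1 + E (Suc (N + i)) (orb (N + i) y) \<noteq> 0" using Eb[OF y, of i] by (intro one_plus_nz) simp
      then have "Re (Ln (1 + E (Suc (N + i)) (orb (N + i) y))) = ln (norm (1 + E (Suc (N + i)) (orb (N + i) y)))"
        by simp
      moreover have "Re (tm i y) = Re (Ln (1 + E (Suc (N + i)) (orb (N + i) y))) * (1 / real d ^ Suc (N + i))"
        unfolding tm_def by (rule Re_times_real)
      ultimately show ?thesis unfolding Dt_def by simp
    qed
    have Re_sum: "Re (\<Sum>i. tm i y) = (\<Sum>i. Dt N i y)"
      using Re_suminf[OF st] ReT by simp
    have nzN: "coord (orb N y) CARD('n) \<noteq> 0" using nzO[OF y, of 0] by simp
    have Ref0: "Re (f0 y) = T N y - ln (norm c0) / real d ^ N"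
    proof -
      have "Re (f0 y) = Re (Ln (coord (orb N y) CARD('n) / c0)) * (1 / real d ^ N)"
        unfolding f0_def by (rule Re_times_real)
      also have "Re (Ln (coord (orb N y) CARD('n) / c0)) = ln (norm (coord (orb N y) CARD('n))) - ln (norm c0)"
        using nzN c0nz by (simp add: norm_divide ln_div)
      finally show ?thesis unfolding T_def by (simp add: diff_divide_distrib)
    qed
    show ?thesis unfolding Gt_W[OF yW] L_def F_def using Ref0 Re_sum by simp
  qed
  show ?thesis using openOb x0Ob ObW hF rep by blast
qed

lemma Gt_nonconst: "\<exists>x\<in>Uplus S. \<exists>y\<in>Uplus S. Gt x \<noteq> Gt y"
proof -
  define pt where "pt t = (mkvec (\<lambda>j. if j = CARD('n) then complex_of_real t else 0) :: complex^'n)" for t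
  have ck: "coord (pt t) CARD('n) = complex_of_real t" for t
    unfolding pt_def using k3 by (subst coord_mkvec) auto
  have cj: "coord (pt t) j = 0" if "j \<in> {1..<CARD('n)}" for t j
    unfolding pt_def using that by (subst coord_mkvec) auto
  have inV: "pt t \<in> V" if "t > R" for t
    unfolding V_def using that R_pos eps_pos by (auto simp: ck cj)
  have inW: "pt t \<in> W 0" if "t > R" for t using inV[OF that] by (simp add: W_def)
  have T0: "T 0 (pt t) = ln t" if "t > R" for t unfolding T_def using that R_pos by (simp add: ck)
  have Gb: "\<bar>Gt (pt t) - ln t\<bar> \<le> 1" if "t > R" for t
    using L_bound[OF inW[OF that]] Gt_W[OF inW[OF that]] T0[OF that] by simp
  define t1 where "t1 = R + 1"
  define t2 where "t2 = exp 3 * t1"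
  have t1R: "t1 > R" by (simp add: t1_def)
  have t2R: "t2 > R"
  proof -
    have "1 \<le> exp (3::real)" by simp
    then have "t1 \<le> t2" unfolding t2_def using t1R R_pos by (simp add: mult_le_cancel_right1)
    then show ?thesis using t1R by linarith
  qed
  have "ln t2 = 3 + ln t1" unfolding t2_def using t1R R_pos by (simp add: ln_mult)
  then have "Gt (pt t1) \<noteq> Gt (pt t2)" using Gb[OF t1R] Gb[OF t2R] by linarith
  moreover have "pt t1 \<in> Uplus S" "pt t2 \<in> Uplus S"
    using in_Uplus[of 0 "pt t1"] in_Uplus[of 0 "pt t2"] inV[OF t1R] inV[OF t2R] by simp_all
  ultimately show ?thesis by blast
qed

end

theorem proposition3p7:
  fixes a :: "nat \<Rightarrow> complex" and \<alpha> :: "nat \<Rightarrow> (nat \<Rightarrow> nat) \<Rightarrow> complex"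
    and dt d :: nat and mt Mt :: real
    and S :: "nat \<Rightarrow> complex^'n::finite \<Rightarrow> complex^'n"
    and G :: "nat \<Rightarrow> complex^'n \<Rightarrow> real"
  assumes "CARD('n) \<ge> 3"
    and "weak_shift_like_seq CARD('n) dt a \<alpha> mt Mt"
    and "d \<ge> dt + 2"
    and "\<And>n. S n = pert_shift dt (a n) (\<alpha> n) d"
    and "\<And>n z. G n z = log_plus (supnorm (Scomp S n z)) / real d ^ n"
  shows "\<exists>Gt :: complex^'n \<Rightarrow> real.
           (\<forall>K. K \<subseteq> Uplus S \<and> compact K \<longrightarrow> uniform_limit K G Gt sequentially) \<and>
           continuous_on (Uplus S) Gt \<and>
           (\<exists>x\<in>Uplus S. \<exists>y\<in>Uplus S. Gt x \<noteq> Gt y) \<and>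
           pluriharmonic (Uplus S) Gt"
proof -
  interpret P: PS a \<alpha> dt d mt Mt S
    using assms(1-4) by unfold_locales auto
  have GG: "G = P.Gf" by (intro ext) (simp add: assms(5) P.Gf_def P.orb_def)
  have WU: "P.W N \<subseteq> Uplus S" for N unfolding P.Uplus_W by (rule UN_upper) simp
  have loc: "\<exists>Ob F c. open Ob \<and> x \<in> Ob \<and> Ob \<subseteq> Uplus S \<and> hol Ob F \<and> (\<forall>y\<in>Ob. P.Gt y = Re (F y) + c)"
    if x: "x \<in> Uplus S" for x
  proof -
    have "x \<in> (\<Union>N. P.W N)" using x by (simp only: P.Uplus_W)
    then obtain N where "x \<in> P.W N" by blast
    from P.local_rep[OF this] obtain Ob F c where
      Ob: "open Ob" "x \<in> Ob" "Ob \<subseteq> P.W N" "hol Ob F" "\<forall>y\<in>Ob. P.Gt y = Re (F y) + c" by blast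
    show ?thesis
    proof (intro exI[of _ Ob] exI[of _ F] exI[of _ c] conjI)
      show "Ob \<subseteq> Uplus S" using Ob(3) WU[of N] by (rule order_trans)
    qed (use Ob in auto)
  qed
  show ?thesis
  proof (intro exI[of _ P.Gt] conjI allI impI)
    fix K assume K: "K \<subseteq> Uplus S \<and> compact K"
    then have cov: "K \<subseteq> (\<Union>N\<in>UNIV. P.W N)" unfolding P.Uplus_W by blast
    obtain C' where C': "C' \<subseteq> UNIV" "finite C'" "K \<subseteq> (\<Union>N\<in>C'. P.W N)"
    proof (rule compactE_image[of K UNIV P.W])
      show "compact K" using K by blast
      show "\<And>T. T \<in> UNIV \<Longrightarrow> open (P.W T)" by (rule P.open_W)
      show "K \<subseteq> (\<Union>N\<in>UNIV. P.W N)" by (rule cov)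
    qed
    define M where "M = Max (insert 0 C')"
    have "P.W N \<subseteq> P.W M" if "N \<in> C'" for N
      using that C'(2) by (intro P.W_mono) (simp add: M_def)
    then have "K \<subseteq> P.W M" using C'(3) by blast
    then show "uniform_limit K G P.Gt sequentially"
      unfolding GG by (rule uniform_limit_on_subset[OF P.ul_Gt])
  next
    show "continuous_on (Uplus S) P.Gt"
      unfolding continuous_on_eq_continuous_at[OF P.open_Uplus]
    proof
      fix x assume xU: "x \<in> Uplus S"
      from loc[OF xU] obtain Ob F c where Ob: "open Ob" "x \<in> Ob" "Ob \<subseteq> Uplus S" "hol Ob F"
        and eq: "\<forall>y\<in>Ob. P.Gt y = Re (F y) + c" by blast
      have c1: "continuous_on Ob (\<lambda>y. Re (F y) + c)" by (intro continuous_intros hol_cont[OF Ob(4)])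
      have "continuous_on Ob P.Gt = continuous_on Ob (\<lambda>y. Re (F y) + c)"
        by (rule continuous_on_cong) (use eq in simp_all)
      then have "continuous_on Ob P.Gt" using c1 by simp
      then show "isCont P.Gt x" using continuous_on_eq_continuous_at[OF Ob(1)] Ob(2) by blast
    qed
  next
    show "\<exists>x\<in>Uplus S. \<exists>y\<in>Uplus S. P.Gt x \<noteq> P.Gt y" by (rule P.Gt_nonconst)
  next
    show "pluriharmonic (Uplus S) P.Gt"
      by (rule pluriharmonicI_local[OF P.open_Uplus loc])
  qed
qed

end
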